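(* In the setting described in the context, let $S^v_m=R^v_{m+1}-R^v_m=\sum_{w\in V_m}L^v_w(C^{vw})$ and $b_m=\big(E\|S^\emptyset_m\|_\infty^2\big)^{1/2}$. Then $b_m^2\le\frac23\,b_{m-1}^2$ for all $m\in\mathbb N$; consequently $b_m\le(2/3)^{m/2}\,b_0$ with $b_0=(E\|C^\emptyset\|_\infty^2)^{1/2}<\infty$, and $\sum_{m\ge0}\|S^\emptyset_m\|_\infty<\infty$ almost surely.
   Context: Notation. $V=\bigcup_{k\ge0}\{1,2\}^k$ is the rooted binary tree of finite words over $\{1,2\}$; $\emptyset$ is the empty word (root), $vw$ is concatenation, $|v|$ is the length, $V_m$ (resp. $V_{<m}$) is the set of words of length $m$ (resp. $<m$). $D=D[0,1]$ is the space of càdlàg functions $[0,1]\to\mathbb R$, $\|f\|_\infty=\sup_t|f(t)|$. $(U^v)_{v\in V}$ are i.i.d. random variables uniformly distributed on $[0,1]$. Cost functions: $C(x)=1+2x\ln x+2(1-x)\ln(1-x)$ for $x\in[0,1]$ (with $0\ln0=0$), and for $t,x\in[0,1]$, $C(t,x)=C(x)+2\,\mathbf 1_{t<x}\big(-1+x+(1-t)\ln(1-t)-(1-x)\ln(1-x)-(x-t)\ln(x-t)\big)$. Quicksort limit variables: for $v,w\in V$ put $\ell^v_\emptyset=1$, $\ell^v_{w1}=\ell^v_wU^{vw}$, $\ell^v_{w2}=\ell^v_w(1-U^{vw})$ and $Q^v=\lim_{m\to\infty}\sum_{w\in V_{<m}}\ell^v_wC(U^{vw})$; this limit exists a.s.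 and in $L_2$, $Q^v$ has the mean-zero Quicksort limit distribution (which has finite moments of all orders), and $Q^v=U^vQ^{v1}+(1-U^v)Q^{v2}+C(U^v)$ a.s. Weighted branching structure: for $v\in V$ define random linear maps $T^v_1,T^v_2$ on functions $h:[0,1]\to\mathbb R$ by $(T^v_1h)(t)=\mathbf 1_{t<U^v}\,U^v\,h(1\wedge t/U^v)$ and $(T^v_2h)(t)=\mathbf 1_{t\ge U^v}(1-U^v)\,h\big(0\vee\frac{t-U^v}{1-U^v}\big)$; the random function $C^v(t)=C(t,U^v)+\mathbf 1_{t\ge U^v}U^vQ^{v1}$; path operators $L^v_\emptyset=\mathrm{id}$, $L^v_{wi}=L^v_w\circ T^{vw}_i$ ($i=1,2$); and $R^v_m=\sum_{w\in V_{<m}}L^v_w(C^{vw})$ for $m\in\mathbb N_0$ (so $R^v_0=0$). *)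

theory Defs
  imports "HOL-Probability.Probability"
begin

text \<open>Words over the alphabet {1,2} are lists of naturals with entries in {1,2};
  the empty list is the root, concatenation is append.  A realisation of the
  family (U^v) is a function u :: nat list => real.\<close>

definition Vset :: "nat list set" where
  "Vset = {w. set w \<subseteq> {1,2}}"

definition Vlen :: "nat \<Rightarrow> nat list set" where
  "Vlen m = {w. set w \<subseteq> {1,2} \<and> length w = m}"

definition Vlt :: "nat \<Rightarrow> nat list set" where
  "Vlt m = {w. set w \<subseteq> {1,2} \<and> length w < m}"

definition xlnx :: "real \<Rightarrow> real" where
  "xlnx x = (if x = 0 then 0 else x * ln x)"

definition costC :: "real \<Rightarrow> real" where
  "costC x = 1 + 2 * xlnx x + 2 * xlnx (1 - x)"

definition costC2 :: "real \<Rightarrow> real \<Rightarrow> real" where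
  "costC2 t x = costC x + 2 * (if t < x then
      (-1 + x + xlnx (1 - t) - xlnx (1 - x) - xlnx (x - t)) else 0)"

text \<open>ell u v w = \<ell>^v_w, defined by recursion on the last letter of w
  (we recurse on the reversed word).\<close>
fun ellrev :: "(nat list \<Rightarrow> real) \<Rightarrow> nat list \<Rightarrow> nat list \<Rightarrow> real" where
  "ellrev u v [] = 1"
| "ellrev u v (i # rw) = ellrev u v rw *
      (if i = 1 then u (v @ rev rw) else 1 - u (v @ rev rw))"

definition ell :: "(nat list \<Rightarrow> real) \<Rightarrow> nat list \<Rightarrow> nat list \<Rightarrow> real" where
  "ell u v w = ellrev u v (rev w)"

text \<open>Q^v as the limit of the partial sums (the limit exists a.s.)\<close>
definition Qlim :: "(nat list \<Rightarrow> real) \<Rightarrow> nat list \<Rightarrow> real" where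
  "Qlim u v = lim (\<lambda>m. \<Sum>w\<in>Vlt m. ell u v w * costC (u (v @ w)))"

definition Top :: "(nat list \<Rightarrow> real) \<Rightarrow> nat list \<Rightarrow> nat \<Rightarrow> (real \<Rightarrow> real) \<Rightarrow> real \<Rightarrow> real" where
  "Top u v i h t = (if i = 1
      then (if t < u v then u v * h (min 1 (t / u v)) else 0)
      else (if t \<ge> u v then (1 - u v) * h (max 0 ((t - u v) / (1 - u v))) else 0))"

definition Cfun :: "(nat list \<Rightarrow> real) \<Rightarrow> nat list \<Rightarrow> real \<Rightarrow> real" where
  "Cfun u v t = costC2 t (u v) + (if t \<ge> u v then u v * Qlim u (v @ [1]) else 0)"

text \<open>Path operators: L^v_{[]} = id, L^v_{w i} = L^v_w o T^{vw}_i
  (recursion on the reversed word).\<close>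
fun Lrev :: "(nat list \<Rightarrow> real) \<Rightarrow> nat list \<Rightarrow> nat list \<Rightarrow> (real \<Rightarrow> real) \<Rightarrow> real \<Rightarrow> real" where
  "Lrev u v [] h = h"
| "Lrev u v (i # rw) h = Lrev u v rw (Top u (v @ rev rw) i h)"

definition Lop :: "(nat list \<Rightarrow> real) \<Rightarrow> nat list \<Rightarrow> nat list \<Rightarrow> (real \<Rightarrow> real) \<Rightarrow> real \<Rightarrow> real" where
  "Lop u v w = Lrev u v (rev w)"

text \<open>R^v_m and S^v_m = R^v_{m+1} - R^v_m = sum over words of length m\<close>
definition Rsum :: "(nat list \<Rightarrow> real) \<Rightarrow> nat list \<Rightarrow> nat \<Rightarrow> real \<Rightarrow> real" where
  "Rsum u v m t = (\<Sum>w\<in>Vlt m. Lop u v w (Cfun u (v @ w)) t)"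

definition Ssum :: "(nat list \<Rightarrow> real) \<Rightarrow> nat list \<Rightarrow> nat \<Rightarrow> real \<Rightarrow> real" where
  "Ssum u v m t = (\<Sum>w\<in>Vlen m. Lop u v w (Cfun u (v @ w)) t)"

definition supnorm :: "(real \<Rightarrow> real) \<Rightarrow> ennreal" where
  "supnorm f = (SUP t\<in>{0..1}. ennreal \<bar>f t\<bar>)"

end

theory Submission
  imports Defs "HOL-Real_Asymp.Real_Asymp"
begin


lemma ell_Nil[simp]: "ell u v [] = 1" by (simp add: ell_def)

lemma ell_snoc: "ell u v (w @ [i]) = ell u v w * (if i = 1 then u (v @ w) else 1 - u (v @ w))"
  by (simp add: ell_def)

lemma Lop_Nil[simp]: "Lop u v [] h = h" by (simp add: Lop_def)

lemma Lop_snoc: "Lop u v (w @ [i]) h = Lop u v w (Top u (v @ w) i h)"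
  by (simp add: Lop_def)

lemma Lop_Cons: "Lop u v (i # w) h = Top u v i (Lop u (v @ [i]) w h)"
proof (induction w arbitrary: h rule: rev_induct)
  case Nil
  then show ?case using Lop_snoc[of u v "[]" i h] by simp
next
  case (snoc x xs)
  have "Lop u v (i # xs @ [x]) h = Lop u v (i # xs) (Top u (v @ i # xs) x h)"
    using Lop_snoc[of u v "i # xs" x h] by simp
  also have "\<dots> = Top u v i (Lop u (v @ [i]) xs (Top u (v @ i # xs) x h))"
    by (rule snoc)
  also have "\<dots> = Top u v i (Lop u (v @ [i]) (xs @ [x]) h)"
    by (simp add: Lop_snoc)
  finally show ?case .
qed

lemma Top_sum: "Top u v i (\<lambda>s. \<Sum>x\<in>S. f x s) t = (\<Sum>x\<in>S. Top u v i (f x) t)"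
  by (simp add: Top_def sum_distrib_left)

lemma Top_add: "Top u v i (\<lambda>s. f s + g s) t = Top u v i f t + Top u v i g t"
  by (simp add: Top_def distrib_left)

lemma Lop_sum: "Lop u v w (\<lambda>s. \<Sum>x\<in>S. f x s) t = (\<Sum>x\<in>S. Lop u v w (f x) t)"
proof (induction w arbitrary: f t rule: rev_induct)
  case Nil then show ?case by simp
next
  case (snoc x xs)
  have "Lop u v (xs @ [x]) (\<lambda>s. \<Sum>y\<in>S. f y s) t = Lop u v xs (Top u (v @ xs) x (\<lambda>s. \<Sum>y\<in>S. f y s)) t"
    by (simp add: Lop_snoc)
  also have "Top u (v @ xs) x (\<lambda>s. \<Sum>y\<in>S. f y s) = (\<lambda>s. \<Sum>y\<in>S. Top u (v @ xs) x (f y) s)"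
    by (rule ext, rule Top_sum)
  also have "Lop u v xs \<dots> t = (\<Sum>y\<in>S. Lop u v xs (Top u (v @ xs) x (f y)) t)"
    by (rule snoc)
  finally show ?case by (simp add: Lop_snoc)
qed

lemma Vlen_0: "Vlen 0 = {[]}" by (auto simp: Vlen_def)

lemma Vlen_Suc: "Vlen (Suc k) = (\<lambda>w. 1 # w) ` Vlen k \<union> (\<lambda>w. 2 # w) ` Vlen k"
proof -
  have "w \<in> Vlen (Suc k) \<Longrightarrow> w \<in> (\<lambda>w. 1 # w) ` Vlen k \<union> (\<lambda>w. 2 # w) ` Vlen k" for w
    by (cases w) (auto simp: Vlen_def)
  then show ?thesis by (auto simp: Vlen_def)
qed

lemma finite_Vlen: "finite (Vlen k)"
proof (induction k)
  case 0 then show ?case by (simp add: Vlen_0)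
next
  case (Suc k) then show ?case by (simp add: Vlen_Suc)
qed

lemma card_Vlen: "card (Vlen k) = 2 ^ k"
proof (induction k)
  case 0 then show ?case by (simp add: Vlen_0)
next
  case (Suc k)
  have "card (Vlen (Suc k)) = card ((\<lambda>w. 1 # w) ` Vlen k) + card ((\<lambda>w. 2 # w) ` Vlen k)"
    unfolding Vlen_Suc by (rule card_Un_disjoint) (auto simp: finite_Vlen)
  also have "\<dots> = 2 ^ Suc k"
    by (subst card_image, simp add: inj_on_def)+ (simp add: Suc)
  finally show ?case .
qed

lemma Vlt_Suc: "Vlt (Suc m) = Vlt m \<union> Vlen m"
  by (auto simp: Vlt_def Vlen_def)

lemma Vlt_0: "Vlt 0 = {}" by (simp add: Vlt_def)

lemma finite_Vlt: "finite (Vlt m)"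
  by (induction m) (auto simp: Vlt_0 Vlt_Suc finite_Vlen)

lemma Vlt_disj: "Vlt m \<inter> Vlen m = {}"
  by (auto simp: Vlt_def Vlen_def)

lemma sum_Vlt: "(\<Sum>w\<in>Vlt m. f w) = (\<Sum>k<m. \<Sum>w\<in>Vlen k. f w)"
  by (induction m) (simp_all add: Vlt_0 Vlt_Suc sum.union_disjoint finite_Vlt finite_Vlen Vlt_disj)

lemma Vset_append[simp]: "v @ w \<in> Vset \<longleftrightarrow> v \<in> Vset \<and> w \<in> Vset"
  by (auto simp: Vset_def)

lemma Vset_Cons[simp]: "i # w \<in> Vset \<longleftrightarrow> (i = 1 \<or> i = 2) \<and> w \<in> Vset"
  by (auto simp: Vset_def)

lemma Vset_Nil[simp]: "[] \<in> Vset" by (simp add: Vset_def)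

lemma Vlen_Vset: "w \<in> Vlen k \<Longrightarrow> w \<in> Vset" by (simp add: Vlen_def Vset_def)
lemma Vlt_Vset: "w \<in> Vlt k \<Longrightarrow> w \<in> Vset" by (simp add: Vlt_def Vset_def)

lemma Ssum_Suc:
  "Ssum u [] (Suc k) t = Top u [] 1 (Ssum u [1] k) t + Top u [] 2 (Ssum u [2] k) t"
proof -
  have "Ssum u [] (Suc k) t = (\<Sum>w\<in>(\<lambda>w. 1 # w) ` Vlen k. Lop u [] w (Cfun u w) t)
      + (\<Sum>w\<in>(\<lambda>w. 2 # w) ` Vlen k. Lop u [] w (Cfun u w) t)"
    unfolding Ssum_def Vlen_Suc by (simp, rule sum.union_disjoint) (auto simp: finite_Vlen)
  also have "\<dots> = (\<Sum>w\<in>Vlen k. Lop u [] (1 # w) (Cfun u (1 # w)) t)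
      + (\<Sum>w\<in>Vlen k. Lop u [] (2 # w) (Cfun u (2 # w)) t)"
    by (subst sum.reindex, simp add: inj_on_def)+ simp
  also have "\<dots> = Top u [] 1 (Ssum u [1] k) t + Top u [] 2 (Ssum u [2] k) t"
    unfolding Ssum_def Lop_Cons by (simp add: Top_sum)
  finally show ?thesis .
qed

lemma Ssum_0: "Ssum u [] 0 = Cfun u []"
  by (auto simp: Ssum_def Vlen_0)

lemma ell_shift: "ell u (v @ v') w = ell (\<lambda>z. u (v @ z)) v' w"
  by (induction w rule: rev_induct) (simp_all add: ell_snoc)

lemma Top_shift: "Top u (v @ v') i = Top (\<lambda>z. u (v @ z)) v' i"
  by (simp add: Top_def fun_eq_iff)

lemma Lop_shift: "Lop u (v @ v') w h = Lop (\<lambda>z. u (v @ z)) v' w h"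
  by (induction w arbitrary: h rule: rev_induct) (simp_all add: Lop_snoc Top_shift)

lemma Qlim_shift: "Qlim u (v @ v') = Qlim (\<lambda>z. u (v @ z)) v'"
  unfolding Qlim_def by (simp add: ell_shift)

lemma Cfun_shift: "Cfun u (v @ v') = Cfun (\<lambda>z. u (v @ z)) v'"
  unfolding Cfun_def by (simp only: append_assoc Qlim_shift[of u v "v' @ [1]"])

lemma Ssum_shift: "Ssum u (v @ v') m = Ssum (\<lambda>z. u (v @ z)) v' m"
  unfolding Ssum_def by (simp add: Lop_shift Cfun_shift)

lemma Ssum_shift1: "Ssum u [i] m = Ssum (\<lambda>z. u (i # z)) [] m"
  using Ssum_shift[of u "[i]" "[]" m] by simp

lemma ell_local:
  assumes "\<And>k. k < length w \<Longrightarrow> u (v @ take k w) = u' (v @ take k w)"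
  shows "ell u v w = ell u' v w"
  using assms
proof (induction w rule: rev_induct)
  case Nil then show ?case by simp
next
  case (snoc x xs)
  have "ell u v xs = ell u' v xs"
    using snoc.prems by (intro snoc.IH) (metis (no_types, lifting) length_append_singleton less_SucI take_append take_eq_Nil2 less_imp_le_nat diff_is_0_eq append_Nil2)
  moreover have "u (v @ xs) = u' (v @ xs)"
    using snoc.prems[of "length xs"] by simp
  ultimately show ?case by (simp add: ell_snoc)
qed

definition agree :: "(nat list \<Rightarrow> real) \<Rightarrow> (nat list \<Rightarrow> real) \<Rightarrow> bool" where
  "agree u u' \<longleftrightarrow> (\<forall>z\<in>Vset. u z = u' z)"

lemma ell_agree: "agree u u' \<Longrightarrow> v \<in> Vset \<Longrightarrow> w \<in> Vset \<Longrightarrow> ell u v w = ell u' v w"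
  by (rule ell_local) (metis (no_types, lifting) Vset_append agree_def append_take_drop_id)

lemma Qlim_agree: "agree u u' \<Longrightarrow> v \<in> Vset \<Longrightarrow> Qlim u v = Qlim u' v"
  unfolding Qlim_def using ell_agree[of u u' v]
  by (auto intro!: arg_cong[where f=lim] ext sum.cong simp: agree_def Vlt_Vset)

lemma Top_agree: "agree u u' \<Longrightarrow> v \<in> Vset \<Longrightarrow> Top u v i = Top u' v i"
  by (auto simp: Top_def agree_def fun_eq_iff)

lemma Lop_agree: "agree u u' \<Longrightarrow> v \<in> Vset \<Longrightarrow> w \<in> Vset \<Longrightarrow> Lop u v w h = Lop u' v w h"
proof (induction w arbitrary: h rule: rev_induct)
  case Nil then show ?case by simp
next
  case (snoc x xs)
  then show ?case by (simp add: Lop_snoc Top_agree)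
qed

lemma Cfun_agree: "agree u u' \<Longrightarrow> v \<in> Vset \<Longrightarrow> Cfun u v = Cfun u' v"
  unfolding Cfun_def using Qlim_agree[of u u' "v @ [1]"] by (auto simp: agree_def)

lemma Ssum_agree: "agree u u' \<Longrightarrow> Ssum u [] m = Ssum u' [] m"
  unfolding Ssum_def
  by (auto intro!: ext sum.cong simp: Lop_agree Cfun_agree Vlen_Vset)



lemma xlnx_bounds: assumes "0 \<le> x" "x \<le> 1" shows "-1 \<le> xlnx x" "xlnx x \<le> 0"
proof -
  show "xlnx x \<le> 0"
    using assms by (auto simp: xlnx_def mult_nonneg_nonpos ln_le_zero_iff)
  show "-1 \<le> xlnx x"
  proof (cases "x = 0")
    case True then show ?thesis by (simp add: xlnx_def)
  next
    case False
    then have "x > 0" using assms by simp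
    have "ln (1/x) \<le> 1/x - 1" using \<open>x > 0\<close> by (intro ln_le_minus_one) auto
    then have "1 - 1 / x \<le> ln x" using \<open>x > 0\<close> by (simp add: ln_div)
    then have "x * (1 - 1/x) \<le> x * ln x" using \<open>x > 0\<close> by (intro mult_left_mono) auto
    moreover have "x * (1 - 1/x) = x - 1" using \<open>x > 0\<close> by (simp add: field_simps)
    ultimately show ?thesis using \<open>x > 0\<close> assms False by (simp add: xlnx_def)
  qed
qed

lemma costC_bound: assumes "0 \<le> x" "x \<le> 1" shows "\<bar>costC x\<bar> \<le> 3"
  using xlnx_bounds[of x] xlnx_bounds[of "1 - x"] assms by (simp add: costC_def abs_le_iff)

lemma costC2_bound: assumes "0 \<le> x" "x \<le> 1" "0 \<le> t" "t \<le> 1" shows "\<bar>costC2 t x\<bar> \<le> 7"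
  using costC_bound[of x] xlnx_bounds[of "1 - x"] xlnx_bounds[of "1 - t"] xlnx_bounds[of "x - t"] assms
  by (auto simp: costC2_def abs_le_iff)

lemma supnorm_le: "ennreal \<bar>h t\<bar> \<le> supnorm h" if "t \<in> {0..1}"
  unfolding supnorm_def using that by (rule SUP_upper)

lemma max_sq_le: "(max (A::ennreal) B) ^ 2 \<le> A ^ 2 + B ^ 2"
  by (cases "A \<le> B") (auto simp: max_def intro: add_increasing add_increasing2)

lemma supnorm_Top2:
  assumes a: "0 \<le> u v" "u v \<le> 1"
  shows "supnorm (\<lambda>t. Top u v 1 h1 t + Top u v 2 h2 t) ^ 2
     \<le> ennreal ((u v)^2) * supnorm h1 ^ 2 + ennreal ((1 - u v)^2) * supnorm h2 ^ 2"
proof -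
  define a where "a = u v"
  have pt: "ennreal \<bar>Top u v 1 h1 t + Top u v 2 h2 t\<bar> \<le> max (ennreal a * supnorm h1) (ennreal (1-a) * supnorm h2)"
    if t: "t \<in> {0..1}" for t
  proof (cases "t < a")
    case True
    then have "a > 0" using t by auto
    define s where "s = min 1 (t / a)"
    have s: "s \<in> {0..1}" using t \<open>a > 0\<close> by (auto simp: s_def)
    have "Top u v 1 h1 t + Top u v 2 h2 t = a * h1 s" using True by (simp add: Top_def a_def s_def)
    then have "ennreal \<bar>Top u v 1 h1 t + Top u v 2 h2 t\<bar> = ennreal a * ennreal \<bar>h1 s\<bar>"
      using \<open>a > 0\<close> by (simp add: abs_mult ennreal_mult)
    also have "\<dots> \<le> ennreal a * supnorm h1" by (intro mult_left_mono supnorm_le s) auto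
    finally show ?thesis by (rule order_trans[OF _ max.cobounded1])
  next
    case False
    define s where "s = max 0 ((t - a) / (1 - a))"
    have "(t - a) / (1 - a) \<le> 1"
    proof (cases "a = 1")
      case True then show ?thesis by simp
    next
      case False then show ?thesis using t a by (simp add: a_def divide_le_eq_1)
    qed
    then have s: "s \<in> {0..1}" by (auto simp: s_def)
    have "Top u v 1 h1 t + Top u v 2 h2 t = (1 - a) * h2 s" using False by (simp add: Top_def a_def s_def)
    then have "ennreal \<bar>Top u v 1 h1 t + Top u v 2 h2 t\<bar> = ennreal (1 - a) * ennreal \<bar>h2 s\<bar>"
      using a by (simp add: abs_mult ennreal_mult a_def)
    also have "\<dots> \<le> ennreal (1 - a) * supnorm h2" by (intro mult_left_mono supnorm_le s) auto
    finally show ?thesis by (rule order_trans[OF _ max.cobounded2])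
  qed
  have "supnorm (\<lambda>t. Top u v 1 h1 t + Top u v 2 h2 t) \<le> max (ennreal a * supnorm h1) (ennreal (1-a) * supnorm h2)"
  proof -
    have "(SUP t\<in>{0..1}. ennreal \<bar>Top u v 1 h1 t + Top u v 2 h2 t\<bar>) \<le> max (ennreal a * supnorm h1) (ennreal (1-a) * supnorm h2)"
      by (rule SUP_least) (rule pt)
    then show ?thesis unfolding supnorm_def[of "\<lambda>t. Top u v 1 h1 t + Top u v 2 h2 t"] .
  qed
  then have "supnorm (\<lambda>t. Top u v 1 h1 t + Top u v 2 h2 t) ^ 2 \<le> (max (ennreal a * supnorm h1) (ennreal (1-a) * supnorm h2)) ^ 2"
    by (rule power_mono) simp
  also have "\<dots> \<le> (ennreal a * supnorm h1) ^ 2 + (ennreal (1-a) * supnorm h2) ^ 2" by (rule max_sq_le)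
  also have "\<dots> = ennreal (a^2) * supnorm h1 ^ 2 + ennreal ((1 - a)^2) * supnorm h2 ^ 2"
    using a by (simp add: power_mult_distrib ennreal_power a_def)
  finally show ?thesis by (simp add: a_def)
qed



definition rc :: "(real \<Rightarrow> real) \<Rightarrow> bool" where
  "rc h \<longleftrightarrow> (\<forall>t\<in>{0..<1}. (h \<longlongrightarrow> h t) (at_right t))"

lemma rc_sum: "(\<And>x. x \<in> S \<Longrightarrow> rc (f x)) \<Longrightarrow> rc (\<lambda>t. \<Sum>x\<in>S. f x t)"
  unfolding rc_def by (auto intro!: tendsto_sum)

lemma ev_right_lt: "t0 < a \<Longrightarrow> eventually (\<lambda>t. t < (a::real)) (at_right t0)"
  unfolding eventually_at_right by (intro exI[of _ a]) auto

lemma Top_rc: assumes "rc h" shows "rc (Top u v i h)"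
  unfolding rc_def
proof
  fix t0 :: real assume t0: "t0 \<in> {0..<1}"
  define a where "a = u v"
  have gt: "eventually (\<lambda>t. t0 < t) (at_right t0)" by (rule eventually_at_right_less)
  show "(Top u v i h \<longlongrightarrow> Top u v i h t0) (at_right t0)"
  proof (cases "i = 1")
    case hi: True
    show ?thesis
    proof (cases "t0 < a")
      case True
      then have "a > 0" using t0 by auto
      have ev: "eventually (\<lambda>t. Top u v i h t = a * h (t / a)) (at_right t0)"
        using ev_right_lt[OF True] gt
        by eventually_elim (use \<open>a>0\<close> in \<open>auto simp: Top_def a_def hi min_def\<close>)
      have lim: "((\<lambda>t. t / a) \<longlongrightarrow> t0 / a) (at_right t0)"
        using \<open>a>0\<close> by (intro tendsto_intros) auto
      have "filterlim (\<lambda>t. t / a) (at_right (t0 / a)) (at_right t0)"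
        using lim gt \<open>a > 0\<close> by (intro tendsto_imp_filterlim_at_right) (auto elim: eventually_mono simp: divide_strict_right_mono)
      moreover have "(h \<longlongrightarrow> h (t0 / a)) (at_right (t0 / a))"
        using assms t0 True \<open>a>0\<close> by (auto simp: rc_def)
      ultimately have "((\<lambda>t. h (t / a)) \<longlongrightarrow> h (t0 / a)) (at_right t0)"
        by (rule filterlim_compose[rotated])
      then have "((\<lambda>t. a * h (t / a)) \<longlongrightarrow> a * h (t0 / a)) (at_right t0)"
        by (intro tendsto_intros)
      moreover have "Top u v i h t0 = a * h (t0 / a)"
        using True \<open>a>0\<close> t0 by (simp add: Top_def a_def hi)
      ultimately show ?thesis using ev by (simp add: tendsto_cong)
    next
      case False
      have ev: "eventually (\<lambda>t. Top u v i h t = 0) (at_right t0)"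
        using gt by eventually_elim (use False in \<open>auto simp: Top_def a_def hi\<close>)
      moreover have "Top u v i h t0 = 0" using False by (simp add: Top_def a_def hi)
      ultimately show ?thesis by (simp add: tendsto_cong)
    qed
  next
    case hi0: False
    then have hi: "i \<noteq> 1" "i \<noteq> Suc 0" by auto
    show ?thesis
    proof (cases "t0 < a")
      case True
      have ev: "eventually (\<lambda>t. Top u v i h t = 0) (at_right t0)"
        using ev_right_lt[OF True] by eventually_elim (auto simp: Top_def a_def hi)
      moreover have "Top u v i h t0 = 0" using True by (simp add: Top_def a_def hi)
      ultimately show ?thesis by (simp add: tendsto_cong)
    next
      case False
      then have "a < 1" using t0 by auto
      have ev: "eventually (\<lambda>t. Top u v i h t = (1 - a) * h ((t - a) / (1 - a))) (at_right t0)"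
        using gt by eventually_elim (use False \<open>a < 1\<close> in \<open>auto simp: Top_def a_def hi max_def\<close>)
      have lim: "((\<lambda>t. (t - a) / (1 - a)) \<longlongrightarrow> (t0 - a) / (1 - a)) (at_right t0)"
        by (intro tendsto_intros) (use \<open>a<1\<close> in auto)
      have "filterlim (\<lambda>t. (t - a) / (1 - a)) (at_right ((t0 - a) / (1 - a))) (at_right t0)"
        using lim gt \<open>a < 1\<close> by (intro tendsto_imp_filterlim_at_right) (auto elim: eventually_mono simp: divide_strict_right_mono)
      moreover have "(h \<longlongrightarrow> h ((t0 - a) / (1 - a))) (at_right ((t0 - a) / (1 - a)))"
        using assms t0 False \<open>a<1\<close> by (auto simp: rc_def divide_less_eq_1)
      ultimately have "((\<lambda>t. h ((t - a) / (1 - a))) \<longlongrightarrow> h ((t0 - a) / (1 - a))) (at_right t0)"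
        by (rule filterlim_compose[rotated])
      then have "((\<lambda>t. (1 - a) * h ((t - a) / (1 - a))) \<longlongrightarrow> (1 - a) * h ((t0 - a) / (1 - a))) (at_right t0)"
        by (intro tendsto_intros)
      moreover have "Top u v i h t0 = (1 - a) * h ((t0 - a) / (1 - a))"
        using False \<open>a<1\<close> t0 by (simp add: Top_def a_def hi)
      ultimately show ?thesis using ev by (simp add: tendsto_cong)
    qed
  qed
qed

lemma Lop_rc: "rc h \<Longrightarrow> rc (Lop u v w h)"
  by (induction w arbitrary: h rule: rev_induct) (simp_all add: Lop_snoc Top_rc)

lemma isCont_xlnx: "p > 0 \<Longrightarrow> isCont xlnx p"
proof -
  assume p: "p > 0"
  have "eventually (\<lambda>y. y * ln y = xlnx y) (nhds p)"
    using eventually_nhds_in_open[of "{0<..}" p] p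
    by (auto elim!: eventually_mono simp: xlnx_def)
  moreover have "isCont (\<lambda>y. y * ln y) p" using p by (intro continuous_intros) auto
  ultimately show ?thesis using isCont_cong[of "\<lambda>y. y * ln y" xlnx p] by simp
qed

lemma Cfun_rc: "rc (Cfun u v)"
  unfolding rc_def
proof
  fix t0 :: real assume t0: "t0 \<in> {0..<1}"
  define x where "x = u v"
  have gt: "eventually (\<lambda>t. t0 < t) (at_right t0)" by (rule eventually_at_right_less)
  show "(Cfun u v \<longlongrightarrow> Cfun u v t0) (at_right t0)"
  proof (cases "t0 < x")
    case True
    define g where "g t = costC x + 2 * (-1 + x + xlnx (1 - t) - xlnx (1 - x) - xlnx (x - t))" for t
    have ev: "eventually (\<lambda>t. Cfun u v t = g t) (at_right t0)"
      using ev_right_lt[OF True] by eventually_elim (simp add: Cfun_def costC2_def g_def x_def)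
    have c1: "isCont xlnx (1 - t0)" using t0 by (intro isCont_xlnx) auto
    have c2: "isCont xlnx (x - t0)" using True by (intro isCont_xlnx) auto
    have l1: "((\<lambda>t. xlnx (1 - t)) \<longlongrightarrow> xlnx (1 - t0)) (at_right t0)"
      by (rule isCont_tendsto_compose[OF c1]) (rule tendsto_diff[OF tendsto_const tendsto_ident_at])
    have l2: "((\<lambda>t. xlnx (x - t)) \<longlongrightarrow> xlnx (x - t0)) (at_right t0)"
      by (rule isCont_tendsto_compose[OF c2]) (rule tendsto_diff[OF tendsto_const tendsto_ident_at])
    have "(g \<longlongrightarrow> g t0) (at_right t0)"
      unfolding g_def by (intro tendsto_add tendsto_mult tendsto_diff tendsto_const l1 l2)
    moreover have "Cfun u v t0 = g t0" using True by (simp add: Cfun_def costC2_def g_def x_def)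
    ultimately show ?thesis using ev by (simp add: tendsto_cong)
  next
    case False
    have ev: "eventually (\<lambda>t. Cfun u v t = Cfun u v t0) (at_right t0)"
      using gt by eventually_elim (use False in \<open>simp add: Cfun_def costC2_def x_def\<close>)
    then show ?thesis by (simp add: tendsto_cong)
  qed
qed

lemma Ssum_rc: "rc (Ssum u v m)"
proof -
  have "Ssum u v m = (\<lambda>t. \<Sum>w\<in>Vlen m. Lop u v w (Cfun u (v @ w)) t)"
    by (simp add: Ssum_def fun_eq_iff)
  then show ?thesis by (simp add: rc_sum Lop_rc Cfun_rc)
qed

lemma supnorm_rat:
  assumes "rc h"
  shows "supnorm h = (SUP t\<in>\<rat> \<inter> {0..1}. ennreal \<bar>h t\<bar>)"
proof (rule antisym)
  define S where "S = (SUP t\<in>\<rat> \<inter> {0..1}. ennreal \<bar>h t\<bar>)"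
  show "supnorm h \<le> S"
    unfolding supnorm_def
  proof (rule SUP_least)
    fix t :: real assume t: "t \<in> {0..1}"
    show "ennreal \<bar>h t\<bar> \<le> S"
    proof (cases "t = 1")
      case True then show ?thesis unfolding S_def by (intro SUP_upper) auto
    next
      case False
      with t have t1: "t \<in> {0..<1}" by auto
      define A where "A = \<rat> \<inter> {t<..<1}"
      have lp: "t islimpt A"
        unfolding islimpt_approachable
      proof (intro allI impI)
        fix e :: real assume "e > 0"
        obtain q where q: "q \<in> \<rat>" "t < q" "q < min 1 (t + e)"
          using Rats_dense_in_real[of t "min 1 (t + e)"] t1 \<open>e>0\<close> by auto
        then show "\<exists>x'\<in>A. x' \<noteq> t \<and> dist x' t < e" unfolding A_def
          by (intro bexI[of _ q]) (auto simp: dist_real_def)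
      qed
      then have nt: "\<not> trivial_limit (at t within A)" by (simp add: trivial_limit_within)
      have "(h \<longlongrightarrow> h t) (at t within A)"
      proof (rule tendsto_mono[OF at_le])
        show "A \<subseteq> {t<..}" by (auto simp: A_def)
        show "(h \<longlongrightarrow> h t) (at_right t)" using assms t1 unfolding rc_def by blast
      qed
      then have "((\<lambda>s. ennreal \<bar>h s\<bar>) \<longlongrightarrow> ennreal \<bar>h t\<bar>) (at t within A)"
        by (intro tendsto_ennrealI tendsto_rabs)
      moreover have "eventually (\<lambda>s. ennreal \<bar>h s\<bar> \<le> S) (at t within A)"
      proof -
        have "\<forall>s\<in>A. ennreal \<bar>h s\<bar> \<le> S"
        proof
          fix s assume "s \<in> A"
          then have "s \<in> \<rat> \<inter> {0..1}" using t1 by (auto simp: A_def)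
          then show "ennreal \<bar>h s\<bar> \<le> S" unfolding S_def by (rule SUP_upper)
        qed
        then show ?thesis unfolding eventually_at_filter by (intro always_eventually) blast
      qed
      ultimately show ?thesis
        by (rule tendsto_le[OF nt tendsto_const])
    qed
  qed
  show "S \<le> supnorm h" unfolding S_def supnorm_def by (rule SUP_subset_mono) auto
qed




lemma xlnx_meas[measurable]: "xlnx \<in> borel_measurable borel"
  unfolding xlnx_def by measurable

lemma costC_meas[measurable]: "costC \<in> borel_measurable borel"
  unfolding costC_def by measurable

lemma costC2_meas: "(\<lambda>p. costC2 (fst p) (snd p)) \<in> borel_measurable (borel \<Otimes>\<^sub>M borel)"
  unfolding costC2_def by measurable

locale measu =
  fixes N :: "'a measure" and ub :: "'a \<Rightarrow> nat list \<Rightarrow> real"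
  assumes meas: "\<And>z. z \<in> Vset \<Longrightarrow> (\<lambda>x. ub x z) \<in> borel_measurable N"
begin

lemma ell_meas: "v \<in> Vset \<Longrightarrow> w \<in> Vset \<Longrightarrow> (\<lambda>x. ell (ub x) v w) \<in> borel_measurable N"
proof (induction w rule: rev_induct)
  case Nil then show ?case by simp
next
  case (snoc i w)
  then have w: "w \<in> Vset" and m: "(\<lambda>x. ub x (v @ w)) \<in> borel_measurable N"
    using meas[of "v @ w"] by auto
  show ?case unfolding ell_snoc
    using snoc.IH[OF snoc.prems(1) w] m by measurable
qed

lemma Qlim_meas: "v \<in> Vset \<Longrightarrow> (\<lambda>x. Qlim (ub x) v) \<in> borel_measurable N"
  unfolding Qlim_def
proof (intro borel_measurable_lim_metric borel_measurable_sum)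
  fix m w assume v: "v \<in> Vset" and w: "w \<in> Vlt m"
  from w have w': "w \<in> Vset" by (rule Vlt_Vset)
  have m: "(\<lambda>x. ub x (v @ w)) \<in> borel_measurable N" using v w' by (intro meas) simp
  show "(\<lambda>x. ell (ub x) v w * costC (ub x (v @ w))) \<in> borel_measurable N"
    using ell_meas[OF v w'] m by measurable
qed

lemma Cfun_meas: "v \<in> Vset \<Longrightarrow> (\<lambda>p. Cfun (ub (fst p)) v (snd p)) \<in> borel_measurable (N \<Otimes>\<^sub>M borel)"
proof -
  assume v: "v \<in> Vset"
  have a[measurable]: "(\<lambda>x. ub x v) \<in> borel_measurable N" using v by (rule meas)
  have q[measurable]: "(\<lambda>x. Qlim (ub x) (v @ [1])) \<in> borel_measurable N" using v by (intro Qlim_meas) simp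
  have "(\<lambda>p. (snd p, ub (fst p) v)) \<in> measurable (N \<Otimes>\<^sub>M borel) (borel \<Otimes>\<^sub>M borel)" by measurable
  from measurable_compose[OF this costC2_meas]
  have c: "(\<lambda>p. costC2 (snd p) (ub (fst p) v)) \<in> borel_measurable (N \<Otimes>\<^sub>M borel)" by simp
  show ?thesis unfolding Cfun_def using c by measurable
qed

lemma Top_meas:
  assumes H: "(\<lambda>p. H (fst p) (snd p)) \<in> borel_measurable (N \<Otimes>\<^sub>M borel)" and z: "z \<in> Vset"
  shows "(\<lambda>p. Top (ub (fst p)) z i (H (fst p)) (snd p)) \<in> borel_measurable (N \<Otimes>\<^sub>M borel)"
proof -
  have a[measurable]: "(\<lambda>x. ub x z) \<in> borel_measurable N" using z by (rule meas)
  have h1: "(\<lambda>p. H (fst p) (min 1 (snd p / ub (fst p) z))) \<in> borel_measurable (N \<Otimes>\<^sub>M borel)"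
  proof -
    have "(\<lambda>p. (fst p, min 1 (snd p / ub (fst p) z))) \<in> measurable (N \<Otimes>\<^sub>M borel) (N \<Otimes>\<^sub>M borel)" by measurable
    from measurable_compose[OF this H] show ?thesis by simp
  qed
  have h2: "(\<lambda>p. H (fst p) (max 0 ((snd p - ub (fst p) z) / (1 - ub (fst p) z)))) \<in> borel_measurable (N \<Otimes>\<^sub>M borel)"
  proof -
    have "(\<lambda>p. (fst p, max 0 ((snd p - ub (fst p) z) / (1 - ub (fst p) z)))) \<in> measurable (N \<Otimes>\<^sub>M borel) (N \<Otimes>\<^sub>M borel)" by measurable
    from measurable_compose[OF this H] show ?thesis by simp
  qed
  show ?thesis unfolding Top_def using h1 h2 by measurable
qed

lemma Lop_meas:
  assumes "v \<in> Vset" "w \<in> Vset"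
  shows "(\<lambda>p. H (fst p) (snd p)) \<in> borel_measurable (N \<Otimes>\<^sub>M borel) \<Longrightarrow>
     (\<lambda>p. Lop (ub (fst p)) v w (H (fst p)) (snd p)) \<in> borel_measurable (N \<Otimes>\<^sub>M borel)"
  using assms
proof (induction w arbitrary: H rule: rev_induct)
  case Nil then show ?case by simp
next
  case (snoc i w)
  then have w: "w \<in> Vset" by simp
  have "(\<lambda>p. Top (ub (fst p)) (v @ w) i (H (fst p)) (snd p)) \<in> borel_measurable (N \<Otimes>\<^sub>M borel)"
    using snoc w by (intro Top_meas) auto
  then show ?case unfolding Lop_snoc using snoc.IH[of "\<lambda>x. Top (ub x) (v @ w) i (H x)"] snoc.prems w by simp
qed

lemma Ssum_jmeas: "(\<lambda>p. Ssum (ub (fst p)) [] m (snd p)) \<in> borel_measurable (N \<Otimes>\<^sub>M borel)"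
  unfolding Ssum_def
proof (intro borel_measurable_sum)
  fix w assume w: "w \<in> Vlen m"
  from w have w': "w \<in> Vset" by (rule Vlen_Vset)
  show "(\<lambda>p. Lop (ub (fst p)) [] w (Cfun (ub (fst p)) ([] @ w)) (snd p)) \<in> borel_measurable (N \<Otimes>\<^sub>M borel)"
    using Lop_meas[of "[]" w "\<lambda>x. Cfun (ub x) w"] Cfun_meas[OF w'] w' by simp
qed

lemma Ssum_meas: "(\<lambda>x. Ssum (ub x) [] m t) \<in> borel_measurable N"
proof -
  have "(\<lambda>x. (x, t)) \<in> measurable N (N \<Otimes>\<^sub>M borel)" by measurable
  from measurable_compose[OF this Ssum_jmeas] show ?thesis by simp
qed

lemma supnorm_meas: "(\<lambda>x. supnorm (Ssum (ub x) [] m)) \<in> borel_measurable N"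
proof -
  have "(\<lambda>x. supnorm (Ssum (ub x) [] m)) = (\<lambda>x. SUP t\<in>\<rat> \<inter> {0..1}. ennreal \<bar>Ssum (ub x) [] m t\<bar>)"
    by (simp add: supnorm_rat[OF Ssum_rc])
  also have "\<dots> \<in> borel_measurable N"
    by (intro borel_measurable_SUP countable_Int1 countable_rat) (use Ssum_meas in measurable)
  finally show ?thesis .
qed

lemma Cfun_supnorm_meas: "(\<lambda>x. supnorm (Cfun (ub x) [])) \<in> borel_measurable N"
  using supnorm_meas[of 0] by (simp add: Ssum_0)

end



lemma xlnx_eq: "xlnx x = x * ln x" by (simp add: xlnx_def)

lemma cont_xlnx: "continuous_on {0..} (\<lambda>x::real. x * ln x)"
proof -
  have "continuous (at x within {0..}) (\<lambda>x::real. x * ln x)" if x: "x \<in> {0..}" for x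
  proof (cases "x = 0")
    case True
    have "((\<lambda>x::real. x * ln x) \<longlongrightarrow> 0) (at_right 0)" by real_asymp
    moreover have "at 0 within {0..} = at (0::real) within {0<..}"
      by (rule at_within_nhd[of _ UNIV]) auto
    ultimately show ?thesis using True
      by (simp add: continuous_within)
  next
    case False
    then have "x > 0" using x by auto
    then have "isCont (\<lambda>x::real. x * ln x) x" by (intro continuous_intros) auto
    then show ?thesis by (rule continuous_at_imp_continuous_within)
  qed
  then show ?thesis by (simp add: continuous_on_eq_continuous_within)
qed

lemma costC_eq: "costC x = 1 + 2 * (x * ln x) + 2 * ((1 - x) * ln (1 - x))"
  by (simp add: costC_def xlnx_eq)

lemma cont_xlnx': "continuous_on {0..} xlnx"
  using cont_xlnx by (simp add: xlnx_eq[abs_def])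

lemma costC_cont: "continuous_on {0..1} costC"
proof -
  have a: "continuous_on {0..1} xlnx"
    by (rule continuous_on_subset[OF cont_xlnx']) auto
  have b: "continuous_on {0..1} (\<lambda>x::real. xlnx (1 - x))"
    by (rule continuous_on_compose2[OF cont_xlnx']) (auto intro!: continuous_intros)
  show ?thesis unfolding costC_def[abs_def] using a b by (intro continuous_intros)
qed

lemma costC_has_integral: "(costC has_integral 0) {0..1}"
proof -
  define G where "G x = x + x\<^sup>2 * ln x - x\<^sup>2 / 2 - (1 - x)\<^sup>2 * ln (1 - x) + (1 - x)\<^sup>2 / 2" for x :: real
  have c1: "continuous_on {0..} (\<lambda>x::real. x * xlnx x)"
    using cont_xlnx' by (intro continuous_intros) auto
  have G_eq: "G = (\<lambda>x. x + x * xlnx x - x\<^sup>2 / 2 - (1 - x) * xlnx (1 - x) + (1 - x)\<^sup>2 / 2)"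
    by (auto simp: G_def fun_eq_iff power2_eq_square xlnx_eq)
  have cG: "continuous_on {0..1} G"
  proof -
    have a: "continuous_on {0..1} (\<lambda>x::real. x * xlnx x)"
      by (rule continuous_on_subset[OF c1]) auto
    have b: "continuous_on {0..1} (\<lambda>x::real. (1 - x) * xlnx (1 - x))"
      by (rule continuous_on_compose2[OF c1]) (auto intro!: continuous_intros)
    have a0: "continuous_on {0..1} xlnx"
      by (rule continuous_on_subset[OF cont_xlnx']) auto
    have b0: "continuous_on {0..1} (\<lambda>x::real. xlnx (1 - x))"
      by (rule continuous_on_compose2[OF cont_xlnx']) (auto intro!: continuous_intros)
    show ?thesis unfolding G_eq by (auto intro!: continuous_intros a0 b0)
  qed
  have dG: "(G has_vector_derivative costC x) (at x)" if x: "x \<in> {0<..<1}" for x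
  proof -
    have d1: "((\<lambda>x. x\<^sup>2 * ln x) has_real_derivative (2 * x * ln x + x)) (at x)"
      using x by (auto intro!: derivative_eq_intros simp: power2_eq_square field_simps)
    have e1: "((\<lambda>x. (1 - x)\<^sup>2) has_real_derivative (-2 * (1 - x))) (at x)"
      by (auto intro!: derivative_eq_intros)
    have e2: "((\<lambda>x. ln (1 - x)) has_real_derivative (-1 / (1 - x))) (at x)"
      using x by (auto intro!: derivative_eq_intros simp: field_simps)
    have e3: "-2 * (1 - x) * ln (1 - x) + -1 / (1 - x) * (1 - x)\<^sup>2 = -2 * (1 - x) * ln (1 - x) - (1 - x)"
      using x by (simp add: power2_eq_square)
    have d2: "((\<lambda>x. (1 - x)\<^sup>2 * ln (1 - x)) has_real_derivative (-2 * (1 - x) * ln (1 - x) - (1 - x))) (at x)"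
      using DERIV_mult[OF e1 e2] unfolding e3 .
    have d3: "((\<lambda>x. x\<^sup>2 / 2) has_real_derivative x) (at x)"
      by (auto intro!: derivative_eq_intros)
    have d4: "((\<lambda>x. (1 - x)\<^sup>2 / 2) has_real_derivative (-(1 - x))) (at x)"
      by (auto intro!: derivative_eq_intros)
    have "(G has_real_derivative (1 + (2 * x * ln x + x) - x - (-2 * (1 - x) * ln (1 - x) - (1 - x)) + (-(1 - x)))) (at x)"
      unfolding G_def by (intro DERIV_add DERIV_diff DERIV_ident d1 d2 d3 d4)
    moreover have "1 + (2 * x * ln x + x) - x - (-2 * (1 - x) * ln (1 - x) - (1 - x)) + (-(1 - x)) = costC x"
      by (simp add: costC_eq algebra_simps)
    ultimately have "(G has_real_derivative costC x) (at x)" by simp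
    then show ?thesis by (simp add: has_real_derivative_iff_has_vector_derivative)
  qed
  have "(costC has_integral (G 1 - G 0)) {0..1}"
    by (rule fundamental_theorem_of_calculus_interior[OF _ cG dG]) auto
  moreover have "G 1 - G 0 = 0" by (simp add: G_def)
  ultimately show ?thesis by simp
qed

lemma sq_has_integral: "((\<lambda>x::real. x\<^sup>2) has_integral 1/3) {0..1}"
proof -
  have "((\<lambda>x::real. x\<^sup>2) has_integral (1^3/3 - 0^3/3)) {0..1}"
    by (rule fundamental_theorem_of_calculus_interior)
       (auto intro!: continuous_intros derivative_eq_intros simp: has_real_derivative_iff_has_vector_derivative[symmetric])
  then show ?thesis by simp
qed

lemma sq1_has_integral: "((\<lambda>x::real. (1 - x)\<^sup>2) has_integral 1/3) {0..1}"
proof -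
  have "((\<lambda>x::real. (1 - x)\<^sup>2) has_integral ((\<lambda>x::real. - ((1 - x) ^ 3) / 3) 1 - (\<lambda>x::real. - ((1 - x) ^ 3) / 3) 0)) {0..1}"
    by (rule fundamental_theorem_of_calculus_interior)
       (auto intro!: continuous_intros derivative_eq_intros simp: has_real_derivative_iff_has_vector_derivative[symmetric] power2_eq_square)
  then show ?thesis by simp
qed

abbreviation "uni \<equiv> uniform_measure lborel {0..1::real}"

lemma uni_eq: "uni = density lborel (\<lambda>x. ennreal (indicator {0..1} x))"
proof -
  have "(\<lambda>x. indicator {0..1::real} x / (1::ennreal)) = (\<lambda>x. ennreal (indicator {0..1} x))"
    by (simp add: divide_ennreal_def fun_eq_iff ennreal_indicator)
  then show ?thesis unfolding uniform_measure_def by simp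
qed

lemma nn_integral_uni: "f \<in> borel_measurable borel \<Longrightarrow>
   (\<integral>\<^sup>+x. f x \<partial>uni) = (\<integral>\<^sup>+x. ennreal (indicator {0..1} x) * f x \<partial>lborel)"
  unfolding uni_eq by (subst nn_integral_density) auto

lemma integral_uni: "(f :: real \<Rightarrow> real) \<in> borel_measurable borel \<Longrightarrow>
   integral\<^sup>L uni f = integral\<^sup>L lborel (\<lambda>x. indicator {0..1} x * f x)"
  unfolding uni_eq by (subst integral_density) auto

lemma nn_uni_has_integral:
  assumes "(f has_integral I) {0..1}" "\<And>x. x \<in> {0..1} \<Longrightarrow> 0 \<le> f x" "f \<in> borel_measurable borel"
  shows "(\<integral>\<^sup>+x. ennreal (f x) \<partial>uni) = ennreal I"
proof -
  have "(\<integral>\<^sup>+x. ennreal (f x) \<partial>uni) = (\<integral>\<^sup>+x. ennreal (indicator {0..1} x * f x) \<partial>lborel)"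
    using assms(3) by (subst nn_integral_uni) (auto simp: ennreal_mult' intro!: nn_integral_cong)
  also have "\<dots> = ennreal I"
    using nn_integral_has_integral_lebesgue[OF assms(2) assms(1)] by simp
  finally show ?thesis .
qed

lemma costC_uni: "integral\<^sup>L uni costC = 0"
proof -
  have int: "integrable lborel (\<lambda>x. indicator {0..1::real} x *\<^sub>R costC x)"
    by (intro borel_integrable_compact costC_cont) auto
  have "((\<lambda>x. indicator {0..1::real} x *\<^sub>R costC x) has_integral 0) UNIV"
  proof -
    have "(\<lambda>x. indicator {0..1::real} x *\<^sub>R costC x) = (\<lambda>x. if x \<in> {0..1} then costC x else 0)"
      by (auto simp: indicator_def fun_eq_iff)
    then show ?thesis using has_integral_restrict_UNIV[THEN iffD2, OF costC_has_integral] by simp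
  qed
  moreover have "((\<lambda>x. indicator {0..1::real} x *\<^sub>R costC x) has_integral
      integral\<^sup>L lborel (\<lambda>x. indicator {0..1::real} x *\<^sub>R costC x)) UNIV"
    by (rule has_integral_integral_lborel[OF int])
  ultimately have "integral\<^sup>L lborel (\<lambda>x. indicator {0..1::real} x *\<^sub>R costC x) = 0"
    using has_integral_unique by blast
  then show ?thesis by (simp add: integral_uni)
qed



lemma uni_prob: "prob_space uni"
  by (rule prob_space_uniform_measure) auto

lemma integral_uni_has_integral:
  fixes f :: "real \<Rightarrow> real"
  assumes c: "continuous_on {0..1} f" and hi: "(f has_integral I) {0..1}" and fm: "f \<in> borel_measurable borel"
  shows "integral\<^sup>L uni f = I"
proof -
  have int: "integrable lborel (\<lambda>x. indicator {0..1::real} x *\<^sub>R f x)"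
    by (intro borel_integrable_compact c) auto
  have "((\<lambda>x. indicator {0..1::real} x *\<^sub>R f x) has_integral I) UNIV"
  proof -
    have "(\<lambda>x. indicator {0..1::real} x *\<^sub>R f x) = (\<lambda>x. if x \<in> {0..1} then f x else 0)"
      by (auto simp: indicator_def fun_eq_iff)
    then show ?thesis using has_integral_restrict_UNIV[THEN iffD2, OF hi] by simp
  qed
  moreover have "((\<lambda>x. indicator {0..1::real} x *\<^sub>R f x) has_integral
      integral\<^sup>L lborel (\<lambda>x. indicator {0..1::real} x *\<^sub>R f x)) UNIV"
    by (rule has_integral_integral_lborel[OF int])
  ultimately have "integral\<^sup>L lborel (\<lambda>x. indicator {0..1::real} x *\<^sub>R f x) = I"
    using has_integral_unique by blast
  then show ?thesis using fm by (simp add: integral_uni)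
qed

lemma uni_sq: "integral\<^sup>L uni (\<lambda>x. x\<^sup>2) = 1/3"
  by (rule integral_uni_has_integral[OF _ sq_has_integral]) (auto intro!: continuous_intros)

lemma uni_sq1: "integral\<^sup>L uni (\<lambda>x. (1 - x)\<^sup>2) = 1/3"
  by (rule integral_uni_has_integral[OF _ sq1_has_integral]) (auto intro!: continuous_intros)

lemma nn_uni_sq: "(\<integral>\<^sup>+x. ennreal (x\<^sup>2) \<partial>uni) = ennreal (1/3)"
  by (rule nn_uni_has_integral[OF sq_has_integral]) auto

lemma nn_uni_sq1: "(\<integral>\<^sup>+x. ennreal ((1 - x)\<^sup>2) \<partial>uni) = ennreal (1/3)"
  by (rule nn_uni_has_integral[OF sq1_has_integral]) auto

lemma indep_var_nn_integral:
  assumes "prob_space M" and ind: "prob_space.indep_var M S X T Y"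
    and f: "f \<in> borel_measurable S" and g: "g \<in> borel_measurable T"
  shows "(\<integral>\<^sup>+\<omega>. f (X \<omega>) * g (Y \<omega>) \<partial>M) = (\<integral>\<^sup>+\<omega>. f (X \<omega>) \<partial>M) * (\<integral>\<^sup>+\<omega>. g (Y \<omega>) \<partial>M)"
proof -
  interpret prob_space M by fact
  have X[measurable]: "X \<in> measurable M S" and Y[measurable]: "Y \<in> measurable M T"
    and eq: "distr M S X \<Otimes>\<^sub>M distr M T Y = distr M (S \<Otimes>\<^sub>M T) (\<lambda>x. (X x, Y x))"
    using ind[unfolded indep_var_distribution_eq] by auto
  interpret DX: prob_space "distr M S X" by (rule prob_space_distr) simp
  interpret DY: prob_space "distr M T Y" by (rule prob_space_distr) simp
  interpret pair_sigma_finite "distr M S X" "distr M T Y" ..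
  have [measurable]: "f \<in> borel_measurable S" "g \<in> borel_measurable T" using f g by auto
  have "(\<integral>\<^sup>+\<omega>. f (X \<omega>) * g (Y \<omega>) \<partial>M) = (\<integral>\<^sup>+p. f (fst p) * g (snd p) \<partial>distr M (S \<Otimes>\<^sub>M T) (\<lambda>x. (X x, Y x)))"
    by (subst nn_integral_distr) auto
  also have "\<dots> = (\<integral>\<^sup>+p. f (fst p) * g (snd p) \<partial>(distr M S X \<Otimes>\<^sub>M distr M T Y))"
    by (simp add: eq)
  also have "\<dots> = (\<integral>\<^sup>+x. \<integral>\<^sup>+y. f x * g y \<partial>distr M T Y \<partial>distr M S X)"
    by (subst DY.nn_integral_fst[symmetric]) auto
  also have "\<dots> = (\<integral>\<^sup>+x. f x * (\<integral>\<^sup>+y. g y \<partial>distr M T Y) \<partial>distr M S X)"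
    by (subst nn_integral_cmult) auto
  also have "\<dots> = (\<integral>\<^sup>+x. f x \<partial>distr M S X) * (\<integral>\<^sup>+y. g y \<partial>distr M T Y)"
    by (subst nn_integral_multc) auto
  also have "\<dots> = (\<integral>\<^sup>+\<omega>. f (X \<omega>) \<partial>M) * (\<integral>\<^sup>+\<omega>. g (Y \<omega>) \<partial>M)"
    by (simp add: nn_integral_distr)
  finally show ?thesis .
qed

lemma countable_Vset: "countable Vset"
  by (rule countableI_type)

locale qs = prob_space M for M :: "'a measure" +
  fixes U :: "nat list \<Rightarrow> 'a \<Rightarrow> real"
  assumes Umeas: "\<And>v. v \<in> Vset \<Longrightarrow> U v \<in> borel_measurable M"
    and indep: "indep_vars (\<lambda>_. borel) U Vset"
    and unif: "\<And>v. v \<in> Vset \<Longrightarrow> distr M borel (U v) = uni"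
begin

abbreviation "Uw \<omega> \<equiv> (\<lambda>v. U v \<omega>)"

sublocale mU: measu M "\<lambda>\<omega> v. U v \<omega>"
  by unfold_locales (simp add: Umeas)

lemma AE_range: "AE \<omega> in M. \<forall>v\<in>Vset. U v \<omega> \<in> {0..1}"
proof (subst AE_ball_countable[OF countable_Vset], intro ballI)
  fix v assume v: "v \<in> Vset"
  have "AE x in distr M borel (U v). x \<in> {0..1}"
    unfolding unif[OF v] by (rule AE_uniform_measureI) auto
  then show "AE \<omega> in M. U v \<omega> \<in> {0..1}"
    using Umeas[OF v] by (subst (asm) AE_distr_iff) auto
qed

lemma nn_exp: "v \<in> Vset \<Longrightarrow> g \<in> borel_measurable borel \<Longrightarrow> (\<integral>\<^sup>+\<omega>. g (U v \<omega>) \<partial>M) = (\<integral>\<^sup>+x. g x \<partial>uni)"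
  using nn_integral_distr[of "U v" M borel g] Umeas[of v] unif[of v] by simp

lemma exp: "v \<in> Vset \<Longrightarrow> (g :: real \<Rightarrow> real) \<in> borel_measurable borel \<Longrightarrow> (\<integral>\<omega>. g (U v \<omega>) \<partial>M) = integral\<^sup>L uni g"
  using integral_distr[of "U v" M borel g] Umeas[of v] unif[of v] by simp

lemma blocks:
  assumes "A \<inter> B = {}" "A \<subseteq> Vset" "B \<subseteq> Vset"
    and f: "f \<in> borel_measurable (PiM A (\<lambda>_. borel))" and g: "g \<in> borel_measurable (PiM B (\<lambda>_. borel))"
  shows "indep_var borel (\<lambda>\<omega>. f (restrict (\<lambda>i. U i \<omega>) A)) borel (\<lambda>\<omega>. g (restrict (\<lambda>i. U i \<omega>) B))"
  using indep_var_compose[OF indep_var_restrict[OF indep assms(1-3)] f g] by (simp add: comp_def)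

lemma blocks_nn:
  assumes "A \<inter> B = {}" "A \<subseteq> Vset" "B \<subseteq> Vset"
    and f: "f \<in> borel_measurable (PiM A (\<lambda>_. borel))" and g: "g \<in> borel_measurable (PiM B (\<lambda>_. borel))"
  shows "(\<integral>\<^sup>+\<omega>. f (restrict (\<lambda>i. U i \<omega>) A) * g (restrict (\<lambda>i. U i \<omega>) B) \<partial>M)
     = (\<integral>\<^sup>+\<omega>. f (restrict (\<lambda>i. U i \<omega>) A) \<partial>M) * (\<integral>\<^sup>+\<omega>. g (restrict (\<lambda>i. U i \<omega>) B) \<partial>M)"
  by (rule indep_var_nn_integral[OF prob_space_axioms indep_var_restrict[OF indep assms(1-3)] f g])

lemma distr_all: "distr M (PiM Vset (\<lambda>_. borel)) (\<lambda>\<omega>. restrict (\<lambda>v. U v \<omega>) Vset) = PiM Vset (\<lambda>_. uni)"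
proof -
  have "distr M (PiM Vset (\<lambda>_. borel)) (\<lambda>\<omega>. restrict (\<lambda>v. U v \<omega>) Vset) = PiM Vset (\<lambda>v. distr M borel (U v))"
  proof -
    have ne: "Vset \<noteq> {}" using Vset_Nil by blast
    show ?thesis using indep by (subst (asm) indep_vars_iff_distr_eq_PiM'[OF ne]) (auto simp: Umeas)
  qed
  also have "\<dots> = PiM Vset (\<lambda>_. uni)"
    by (rule PiM_cong) (auto simp: unif)
  finally show ?thesis .
qed

lemma distr_shift:
  assumes i: "i = 1 \<or> i = 2"
  shows "distr M (PiM Vset (\<lambda>_. borel)) (\<lambda>\<omega>. restrict (\<lambda>v. U (i # v) \<omega>) Vset) = PiM Vset (\<lambda>_. uni)"
proof -
  let ?P = "PiM Vset (\<lambda>_. borel :: real measure)"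
  let ?Q = "PiM Vset (\<lambda>_. uni)"
  have sQ: "sets ?Q = sets ?P" by (rule sets_PiM_cong) auto
  have m1: "(\<lambda>\<omega>. restrict (\<lambda>v. U v \<omega>) Vset) \<in> measurable M ?P"
    by (intro measurable_restrict) (auto simp: Umeas)
  have m2: "(\<lambda>\<omega>. restrict (\<lambda>n. \<omega> (i # n)) Vset) \<in> measurable ?P ?P"
    using i by (intro measurable_restrict measurable_component_singleton) auto
  have "distr M ?P (\<lambda>\<omega>. restrict (\<lambda>v. U (i # v) \<omega>) Vset)
      = distr M ?P ((\<lambda>\<omega>. restrict (\<lambda>n. \<omega> (i # n)) Vset) \<circ> (\<lambda>\<omega>. restrict (\<lambda>v. U v \<omega>) Vset))"
    using i by (intro distr_cong) (auto simp: fun_eq_iff restrict_def)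
  also have "\<dots> = distr (distr M ?P (\<lambda>\<omega>. restrict (\<lambda>v. U v \<omega>) Vset)) ?P (\<lambda>\<omega>. restrict (\<lambda>n. \<omega> (i # n)) Vset)"
    by (rule distr_distr[OF m2 m1, symmetric])
  also have "\<dots> = distr ?Q ?P (\<lambda>\<omega>. restrict (\<lambda>n. \<omega> (i # n)) Vset)"
    by (simp add: distr_all)
  also have "\<dots> = distr ?Q ?Q (\<lambda>\<omega>. restrict (\<lambda>n. \<omega> (i # n)) Vset)"
    by (rule distr_cong) (auto simp: sQ)
  also have "\<dots> = ?Q"
    using distr_PiM_reindex[of Vset "\<lambda>_. uni" "\<lambda>n. i # n" Vset] i uni_prob
    by (auto simp: inj_on_def)
  finally show ?thesis .
qed

end



definition Fsq :: "nat \<Rightarrow> (nat list \<Rightarrow> real) \<Rightarrow> ennreal" where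
  "Fsq m u = supnorm (Ssum u [] m) ^ 2"

lemma Fsq_agree: "agree u u' \<Longrightarrow> Fsq m u = Fsq m u'"
  by (simp add: Fsq_def Ssum_agree)

lemma measu_Fsq: "measu N ub \<Longrightarrow> (\<lambda>x. Fsq m (ub x)) \<in> borel_measurable N"
  unfolding Fsq_def using measu.supnorm_meas by measurable

lemma measu_Pi: "measu (PiM Vset (\<lambda>_. borel)) (\<lambda>x. x)"
  by unfold_locales (rule measurable_component_singleton)

lemma measu_Pi_shift: "(#) i ` Vset \<subseteq> B \<Longrightarrow> measu (PiM B (\<lambda>_. borel)) (\<lambda>r z. r (i # z))"
  by unfold_locales (auto intro!: measurable_component_singleton)

context qs
begin

lemma measu_shift: "i = 1 \<or> i = 2 \<Longrightarrow> measu M (\<lambda>\<omega> v. U (i # v) \<omega>)"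
  by unfold_locales (auto intro!: Umeas)

lemma restrict_agree: "Vset \<subseteq> A \<Longrightarrow> agree (restrict f A) f"
  by (auto simp: agree_def)

lemma shift_exp:
  assumes i: "i = 1 \<or> i = 2"
  shows "(\<integral>\<^sup>+\<omega>. Fsq m (\<lambda>v. U (i # v) \<omega>) \<partial>M) = (\<integral>\<^sup>+\<omega>. Fsq m (\<lambda>v. U v \<omega>) \<partial>M)"
proof -
  let ?P = "PiM Vset (\<lambda>_. borel :: real measure)"
  have Phi[measurable]: "(\<lambda>x. Fsq m x) \<in> borel_measurable ?P"
    using measu_Fsq[OF measu_Pi] by simp
  have m1[measurable]: "(\<lambda>\<omega>. restrict (\<lambda>v. U (i # v) \<omega>) Vset) \<in> measurable M ?P"
    using i by (intro measurable_restrict) (auto simp: Umeas)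
  have m0[measurable]: "(\<lambda>\<omega>. restrict (\<lambda>v. U v \<omega>) Vset) \<in> measurable M ?P"
    by (intro measurable_restrict) (auto simp: Umeas)
  have "(\<integral>\<^sup>+\<omega>. Fsq m (\<lambda>v. U (i # v) \<omega>) \<partial>M) = (\<integral>\<^sup>+\<omega>. Fsq m (restrict (\<lambda>v. U (i # v) \<omega>) Vset) \<partial>M)"
    by (intro nn_integral_cong Fsq_agree) (auto simp: agree_def)
  also have "\<dots> = (\<integral>\<^sup>+x. Fsq m x \<partial>distr M ?P (\<lambda>\<omega>. restrict (\<lambda>v. U (i # v) \<omega>) Vset))"
    by (subst nn_integral_distr) auto
  also have "\<dots> = (\<integral>\<^sup>+x. Fsq m x \<partial>distr M ?P (\<lambda>\<omega>. restrict (\<lambda>v. U v \<omega>) Vset))"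
    by (simp add: distr_shift[OF i] distr_all)
  also have "\<dots> = (\<integral>\<^sup>+\<omega>. Fsq m (restrict (\<lambda>v. U v \<omega>) Vset) \<partial>M)"
    by (subst nn_integral_distr) auto
  also have "\<dots> = (\<integral>\<^sup>+\<omega>. Fsq m (\<lambda>v. U v \<omega>) \<partial>M)"
    by (intro nn_integral_cong Fsq_agree) (auto simp: agree_def)
  finally show ?thesis .
qed

lemma indep_part:
  assumes i: "i = 1 \<or> i = 2" and h[measurable]: "h \<in> borel_measurable borel"
  shows "(\<integral>\<^sup>+\<omega>. h (U [] \<omega>) * Fsq k (\<lambda>v. U (i # v) \<omega>) \<partial>M)
     = (\<integral>\<^sup>+\<omega>. h (U [] \<omega>) \<partial>M) * (\<integral>\<^sup>+\<omega>. Fsq k (\<lambda>v. U v \<omega>) \<partial>M)"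
proof -
  define B where "B = Vset - {[]}"
  have iB: "(#) i ` Vset \<subseteq> B" using i by (auto simp: B_def)
  have f: "(\<lambda>r. h (r [])) \<in> borel_measurable (PiM {[]} (\<lambda>_. borel :: real measure))"
    by measurable
  have g: "(\<lambda>r. Fsq k (\<lambda>z. r (i # z))) \<in> borel_measurable (PiM B (\<lambda>_. borel :: real measure))"
    by (rule measu_Fsq[OF measu_Pi_shift[OF iB]])
  have *: "Fsq k (\<lambda>z. restrict (\<lambda>j. U j \<omega>) B (i # z)) = Fsq k (\<lambda>v. U (i # v) \<omega>)" for \<omega>
    by (rule Fsq_agree) (use iB in \<open>auto simp: agree_def\<close>)
  have **: "restrict (\<lambda>j. U j \<omega>) {[]} [] = U [] \<omega>" for \<omega> by simp
  have "(\<integral>\<^sup>+\<omega>. h (U [] \<omega>) * Fsq k (\<lambda>v. U (i # v) \<omega>) \<partial>M)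
      = (\<integral>\<^sup>+\<omega>. h (restrict (\<lambda>j. U j \<omega>) {[]} []) * Fsq k (\<lambda>z. restrict (\<lambda>j. U j \<omega>) B (i # z)) \<partial>M)"
    by (simp only: * ** )
  also have "\<dots> = (\<integral>\<^sup>+\<omega>. h (restrict (\<lambda>j. U j \<omega>) {[]} []) \<partial>M) * (\<integral>\<^sup>+\<omega>. Fsq k (\<lambda>z. restrict (\<lambda>j. U j \<omega>) B (i # z)) \<partial>M)"
    by (rule blocks_nn[OF _ _ _ f g]) (auto simp: B_def)
  also have "\<dots> = (\<integral>\<^sup>+\<omega>. h (U [] \<omega>) \<partial>M) * (\<integral>\<^sup>+\<omega>. Fsq k (\<lambda>v. U (i # v) \<omega>) \<partial>M)"
    by (simp only: * ** )
  also have "\<dots> = (\<integral>\<^sup>+\<omega>. h (U [] \<omega>) \<partial>M) * (\<integral>\<^sup>+\<omega>. Fsq k (\<lambda>v. U v \<omega>) \<partial>M)"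
    by (simp add: shift_exp[OF i])
  finally show ?thesis .
qed

lemma rec_step:
  "(\<integral>\<^sup>+\<omega>. Fsq (Suc k) (\<lambda>v. U v \<omega>) \<partial>M) \<le> ennreal (2/3) * (\<integral>\<^sup>+\<omega>. Fsq k (\<lambda>v. U v \<omega>) \<partial>M)"
proof -
  interpret m1: measu M "\<lambda>\<omega> v. U (1 # v) \<omega>" by (rule measu_shift) simp
  interpret m2: measu M "\<lambda>\<omega> v. U (2 # v) \<omega>" by (rule measu_shift) simp
  have U0[measurable]: "U [] \<in> borel_measurable M" by (rule Umeas) simp
  have F1[measurable]: "(\<lambda>\<omega>. Fsq k (\<lambda>v. U (1 # v) \<omega>)) \<in> borel_measurable M"
    by (rule measu_Fsq) unfold_locales
  have F2[measurable]: "(\<lambda>\<omega>. Fsq k (\<lambda>v. U (2 # v) \<omega>)) \<in> borel_measurable M"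
    by (rule measu_Fsq) unfold_locales
  have pw: "Fsq (Suc k) (\<lambda>v. U v \<omega>) \<le> ennreal ((U [] \<omega>)\<^sup>2) * Fsq k (\<lambda>v. U (1 # v) \<omega>)
          + ennreal ((1 - U [] \<omega>)\<^sup>2) * Fsq k (\<lambda>v. U (2 # v) \<omega>)"
    if r: "0 \<le> U [] \<omega>" "U [] \<omega> \<le> 1" for \<omega>
  proof -
    have "Ssum (\<lambda>v. U v \<omega>) [] (Suc k) = (\<lambda>t. Top (\<lambda>v. U v \<omega>) [] 1 (Ssum (\<lambda>v. U v \<omega>) [1] k) t
        + Top (\<lambda>v. U v \<omega>) [] 2 (Ssum (\<lambda>v. U v \<omega>) [2] k) t)"
      by (rule ext, rule Ssum_Suc)
    then have "Fsq (Suc k) (\<lambda>v. U v \<omega>) \<le> ennreal ((U [] \<omega>)\<^sup>2) * supnorm (Ssum (\<lambda>v. U v \<omega>) [1] k) ^ 2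
       + ennreal ((1 - U [] \<omega>)\<^sup>2) * supnorm (Ssum (\<lambda>v. U v \<omega>) [2] k) ^ 2"
      unfolding Fsq_def using supnorm_Top2[of "\<lambda>v. U v \<omega>" "[]"] r by simp
    then show ?thesis by (simp add: Fsq_def Ssum_shift1)
  qed
  have "(\<integral>\<^sup>+\<omega>. Fsq (Suc k) (\<lambda>v. U v \<omega>) \<partial>M) \<le> (\<integral>\<^sup>+\<omega>. ennreal ((U [] \<omega>)\<^sup>2) * Fsq k (\<lambda>v. U (1 # v) \<omega>)
          + ennreal ((1 - U [] \<omega>)\<^sup>2) * Fsq k (\<lambda>v. U (2 # v) \<omega>) \<partial>M)"
  proof (rule nn_integral_mono_AE)
    show "AE \<omega> in M. Fsq (Suc k) (\<lambda>v. U v \<omega>) \<le> ennreal ((U [] \<omega>)\<^sup>2) * Fsq k (\<lambda>v. U (1 # v) \<omega>)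
          + ennreal ((1 - U [] \<omega>)\<^sup>2) * Fsq k (\<lambda>v. U (2 # v) \<omega>)"
      using AE_range
    proof eventually_elim
      case (elim \<omega>)
      then have "U [] \<omega> \<in> {0..1}" by simp
      then show ?case by (intro pw) auto
    qed
  qed
  also have "\<dots> = (\<integral>\<^sup>+\<omega>. ennreal ((U [] \<omega>)\<^sup>2) * Fsq k (\<lambda>v. U (1 # v) \<omega>) \<partial>M)
       + (\<integral>\<^sup>+\<omega>. ennreal ((1 - U [] \<omega>)\<^sup>2) * Fsq k (\<lambda>v. U (2 # v) \<omega>) \<partial>M)"
    by (rule nn_integral_add; measurable)
  also have "\<dots> = (\<integral>\<^sup>+\<omega>. ennreal ((U [] \<omega>)\<^sup>2) \<partial>M) * (\<integral>\<^sup>+\<omega>. Fsq k (\<lambda>v. U v \<omega>) \<partial>M)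
       + (\<integral>\<^sup>+\<omega>. ennreal ((1 - U [] \<omega>)\<^sup>2) \<partial>M) * (\<integral>\<^sup>+\<omega>. Fsq k (\<lambda>v. U v \<omega>) \<partial>M)"
    using indep_part[of 1 "\<lambda>x. ennreal (x\<^sup>2)" k] indep_part[of 2 "\<lambda>x. ennreal ((1 - x)\<^sup>2)" k] by simp
  also have "(\<integral>\<^sup>+\<omega>. ennreal ((U [] \<omega>)\<^sup>2) \<partial>M) = ennreal (1/3)"
    using nn_exp[of "[]" "\<lambda>x. ennreal (x\<^sup>2)"] nn_uni_sq by simp
  also have "(\<integral>\<^sup>+\<omega>. ennreal ((1 - U [] \<omega>)\<^sup>2) \<partial>M) = ennreal (1/3)"
    using nn_exp[of "[]" "\<lambda>x. ennreal ((1 - x)\<^sup>2)"] nn_uni_sq1 by simp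
  also have "ennreal (1/3) * (\<integral>\<^sup>+\<omega>. Fsq k (\<lambda>v. U v \<omega>) \<partial>M) + ennreal (1/3) * (\<integral>\<^sup>+\<omega>. Fsq k (\<lambda>v. U v \<omega>) \<partial>M)
      = ennreal (2/3) * (\<integral>\<^sup>+\<omega>. Fsq k (\<lambda>v. U v \<omega>) \<partial>M)"
    by (simp add: distrib_right[symmetric] ennreal_plus[symmetric] del: ennreal_plus)
  finally show ?thesis .
qed

end



lemma measu_PiB: "measu (PiM B (\<lambda>_. borel)) (\<lambda>r z. if z \<in> B then r z else 0)"
proof unfold_locales
  fix z :: "nat list"
  show "(\<lambda>x. if z \<in> B then x z else 0) \<in> borel_measurable (PiM B (\<lambda>_. borel))"
    by (cases "z \<in> B") (auto intro: measurable_component_singleton)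
qed

definition pref :: "nat list \<Rightarrow> nat list \<Rightarrow> nat list set" where
  "pref v w = (\<lambda>k. v @ take k w) ` {..<length w}"

lemma ell_pref_meas:
  assumes "pref v w \<subseteq> B" "v \<in> Vset" "w \<in> Vset"
  shows "(\<lambda>r. ell r v w) \<in> borel_measurable (PiM B (\<lambda>_. borel))"
proof -
  have "(\<lambda>r. ell (\<lambda>z. if z \<in> B then r z else 0) v w) \<in> borel_measurable (PiM B (\<lambda>_. borel))"
    by (rule measu.ell_meas[OF measu_PiB assms(2,3)])
  moreover have "ell (\<lambda>z. if z \<in> B then r z else 0) v w = ell r v w" for r
    by (rule ell_local) (use assms(1) in \<open>auto simp: pref_def\<close>)
  ultimately show ?thesis by simp
qed

lemma ell_pref_restrict:
  assumes "pref v w \<subseteq> B"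
  shows "ell (restrict f B) v w = ell f v w"
  by (rule ell_local) (use assms in \<open>auto simp: pref_def\<close>)

lemma ell_range:
  assumes "\<And>z. z \<in> Vset \<Longrightarrow> u z \<in> {0..1}" "v \<in> Vset" "w \<in> Vset"
  shows "0 \<le> ell u v w \<and> ell u v w \<le> 1"
  using assms(3)
proof (induction w rule: rev_induct)
  case Nil then show ?case by simp
next
  case (snoc i w)
  then have w: "w \<in> Vset" by simp
  have "u (v @ w) \<in> {0..1}" using assms(1,2) w by simp
  then show ?case using snoc.IH[OF w] by (auto simp: ell_snoc intro: mult_le_one mult_nonneg_nonneg)
qed

lemma pref_Vset: "v \<in> Vset \<Longrightarrow> w \<in> Vset \<Longrightarrow> pref v w \<subseteq> Vset"
proof
  fix x assume v: "v \<in> Vset" and w: "w \<in> Vset" and x: "x \<in> pref v w"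
  then obtain k where x: "x = v @ take k w" unfolding pref_def by blast
  have "set (take k w) \<subseteq> set w" by (rule set_take_subset)
  then show "x \<in> Vset" using v w x by (auto simp: Vset_def)
qed

lemma pref_notin: "v @ w \<notin> pref v w"
proof
  assume "v @ w \<in> pref v w"
  then obtain k where k: "k < length w" and eq: "v @ w = v @ take k w" unfolding pref_def by blast
  have "length (v @ w) = length (v @ take k w)" using eq by (rule arg_cong)
  then show False using k by simp
qed

lemma pref_snoc: "pref v (w @ [i]) = insert (v @ w) (pref v w)"
proof -
  have "{..<length (w @ [i])} = insert (length w) {..<length w}" by auto
  then have "pref v (w @ [i]) = insert (v @ w) ((\<lambda>k. v @ take k (w @ [i])) ` {..<length w})"
    by (simp add: pref_def)
  also have "(\<lambda>k. v @ take k (w @ [i])) ` {..<length w} = pref v w"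
    unfolding pref_def by (rule image_cong) auto
  finally show ?thesis .
qed

context qs
begin

lemma blocks_int:
  fixes f g :: "(nat list \<Rightarrow> real) \<Rightarrow> real"
  assumes "A \<inter> B = {}" "A \<subseteq> Vset" "B \<subseteq> Vset"
    and f: "f \<in> borel_measurable (PiM A (\<lambda>_. borel))" and g: "g \<in> borel_measurable (PiM B (\<lambda>_. borel))"
    and "integrable M (\<lambda>\<omega>. f (restrict (\<lambda>i. U i \<omega>) A))" "integrable M (\<lambda>\<omega>. g (restrict (\<lambda>i. U i \<omega>) B))"
  shows "(\<integral>\<omega>. f (restrict (\<lambda>i. U i \<omega>) A) * g (restrict (\<lambda>i. U i \<omega>) B) \<partial>M)
     = (\<integral>\<omega>. f (restrict (\<lambda>i. U i \<omega>) A) \<partial>M) * (\<integral>\<omega>. g (restrict (\<lambda>i. U i \<omega>) B) \<partial>M)"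
  by (rule indep_var_lebesgue_integral[OF blocks[OF assms(1-5)] assms(6,7)])

lemma AE_ell: "v \<in> Vset \<Longrightarrow> w \<in> Vset \<Longrightarrow> AE \<omega> in M. 0 \<le> ell (\<lambda>z. U z \<omega>) v w \<and> ell (\<lambda>z. U z \<omega>) v w \<le> 1"
  using AE_range by eventually_elim (rule ell_range, auto)

lemma AE_costC: "z \<in> Vset \<Longrightarrow> AE \<omega> in M. \<bar>costC (U z \<omega>)\<bar> \<le> 3"
  using AE_range by eventually_elim (auto intro: costC_bound)

lemma ell_sq_exp:
  assumes v: "v \<in> Vset" shows "w \<in> Vset \<Longrightarrow> (\<integral>\<omega>. (ell (\<lambda>z. U z \<omega>) v w)\<^sup>2 \<partial>M) = (1/3) ^ length w"
proof (induction w rule: rev_induct)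
  case Nil then show ?case by (simp add: prob_space)
next
  case (snoc i w)
  then have w: "w \<in> Vset" by simp
  define fi where "fi x = (if i = 1 then x else 1 - x)" for x :: real
  define A where "A = {v @ w}"
  define B where "B = pref v w"
  have AB: "A \<inter> B = {}" "A \<subseteq> Vset" "B \<subseteq> Vset"
    using pref_notin[of v w] pref_Vset[OF v w] v w by (auto simp: A_def B_def)
  have f: "(\<lambda>r. (fi (r (v @ w)))\<^sup>2) \<in> borel_measurable (PiM A (\<lambda>_. borel))"
    unfolding fi_def A_def by measurable
  have g: "(\<lambda>r. (ell r v w)\<^sup>2) \<in> borel_measurable (PiM B (\<lambda>_. borel))"
    using ell_pref_meas[of v w B] v w by (simp add: B_def)
  have U0: "U (v @ w) \<in> borel_measurable M" using v w by (intro Umeas) simp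
  have fint: "integrable M (\<lambda>\<omega>. (fi (restrict (\<lambda>j. U j \<omega>) A (v @ w)))\<^sup>2)"
  proof (rule integrable_const_bound[where B=1])
    show "AE \<omega> in M. norm ((fi (restrict (\<lambda>j. U j \<omega>) A (v @ w)))\<^sup>2) \<le> 1"
      using AE_range
    proof eventually_elim
      case (elim \<omega>)
      then have "U (v @ w) \<omega> \<in> {0..1}" using v w by simp
      then have "0 \<le> fi (U (v @ w) \<omega>) \<and> fi (U (v @ w) \<omega>) \<le> 1" by (auto simp: fi_def)
      then have "(fi (U (v @ w) \<omega>))\<^sup>2 \<le> 1" by (simp add: power_le_one)
      then show ?case by (simp add: A_def)
    qed
    show "(\<lambda>\<omega>. (fi (restrict (\<lambda>j. U j \<omega>) A (v @ w)))\<^sup>2) \<in> borel_measurable M"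
      using U0 by (simp add: A_def fi_def)
  qed
  have gint: "integrable M (\<lambda>\<omega>. (ell (restrict (\<lambda>j. U j \<omega>) B) v w)\<^sup>2)"
  proof (rule integrable_const_bound[where B=1])
    show "AE \<omega> in M. norm ((ell (restrict (\<lambda>j. U j \<omega>) B) v w)\<^sup>2) \<le> 1"
      using AE_ell[OF v w] by eventually_elim (auto simp: B_def ell_pref_restrict abs_square_le_1)
    show "(\<lambda>\<omega>. (ell (restrict (\<lambda>j. U j \<omega>) B) v w)\<^sup>2) \<in> borel_measurable M"
      using mU.ell_meas[OF v w] by (simp add: B_def ell_pref_restrict)
  qed
  have "(\<integral>\<omega>. (ell (\<lambda>z. U z \<omega>) v (w @ [i]))\<^sup>2 \<partial>M)
      = (\<integral>\<omega>. (fi (restrict (\<lambda>j. U j \<omega>) A (v @ w)))\<^sup>2 * (ell (restrict (\<lambda>j. U j \<omega>) B) v w)\<^sup>2 \<partial>M)"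
  proof (rule Bochner_Integration.integral_cong[OF refl])
    fix \<omega>
    have e1: "ell (\<lambda>z. U z \<omega>) v (w @ [i]) = fi (U (v @ w) \<omega>) * ell (\<lambda>z. U z \<omega>) v w"
      by (simp add: ell_snoc fi_def)
    have e2: "restrict (\<lambda>j. U j \<omega>) A (v @ w) = U (v @ w) \<omega>" by (simp add: A_def)
    have e3: "ell (restrict (\<lambda>j. U j \<omega>) B) v w = ell (\<lambda>z. U z \<omega>) v w"
      unfolding B_def by (rule ell_pref_restrict) simp
    show "(ell (\<lambda>z. U z \<omega>) v (w @ [i]))\<^sup>2 = (fi (restrict (\<lambda>j. U j \<omega>) A (v @ w)))\<^sup>2 * (ell (restrict (\<lambda>j. U j \<omega>) B) v w)\<^sup>2"
      unfolding e1 e2 e3 by (rule power_mult_distrib)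
  qed
  also have "\<dots> = (\<integral>\<omega>. (fi (restrict (\<lambda>j. U j \<omega>) A (v @ w)))\<^sup>2 \<partial>M) * (\<integral>\<omega>. (ell (restrict (\<lambda>j. U j \<omega>) B) v w)\<^sup>2 \<partial>M)"
    by (rule blocks_int[OF AB f g fint gint])
  also have "(\<integral>\<omega>. (fi (restrict (\<lambda>j. U j \<omega>) A (v @ w)))\<^sup>2 \<partial>M) = 1/3"
  proof -
    have "(\<integral>\<omega>. (fi (restrict (\<lambda>j. U j \<omega>) A (v @ w)))\<^sup>2 \<partial>M) = (\<integral>\<omega>. (fi (U (v @ w) \<omega>))\<^sup>2 \<partial>M)"
      by (simp add: A_def)
    also have "\<dots> = integral\<^sup>L uni (\<lambda>x. (fi x)\<^sup>2)"
      using v w by (intro exp) (auto simp: fi_def)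
    also have "\<dots> = 1/3"
      by (cases "i = 1") (simp_all add: fi_def uni_sq uni_sq1)
    finally show ?thesis .
  qed
  also have "(\<integral>\<omega>. (ell (restrict (\<lambda>j. U j \<omega>) B) v w)\<^sup>2 \<partial>M) = (1/3) ^ length w"
    using snoc.IH[OF w] by (simp add: B_def ell_pref_restrict)
  finally show ?case by simp
qed

end



context qs
begin

definition aw :: "nat list \<Rightarrow> nat list \<Rightarrow> 'a \<Rightarrow> real" where
  "aw v w \<omega> = ell (\<lambda>z. U z \<omega>) v w * costC (U (v @ w) \<omega>)"

lemma aw_meas[measurable]: "v \<in> Vset \<Longrightarrow> w \<in> Vset \<Longrightarrow> aw v w \<in> borel_measurable M"
proof -
  assume v: "v \<in> Vset" and w: "w \<in> Vset"
  have [measurable]: "U (v @ w) \<in> borel_measurable M" using v w by (intro Umeas) simp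
  have [measurable]: "(\<lambda>\<omega>. ell (\<lambda>z. U z \<omega>) v w) \<in> borel_measurable M" by (rule mU.ell_meas[OF v w])
  show ?thesis unfolding aw_def[abs_def] by measurable
qed

lemma aw_bound: "v \<in> Vset \<Longrightarrow> w \<in> Vset \<Longrightarrow> AE \<omega> in M. \<bar>aw v w \<omega>\<bar> \<le> 3"
proof -
  assume v: "v \<in> Vset" and w: "w \<in> Vset"
  have vw: "v @ w \<in> Vset" using v w by simp
  show ?thesis using AE_ell[OF v w] AE_costC[OF vw]
  proof eventually_elim
    case (elim \<omega>)
    have "\<bar>aw v w \<omega>\<bar> = \<bar>ell (\<lambda>z. U z \<omega>) v w\<bar> * \<bar>costC (U (v @ w) \<omega>)\<bar>" by (simp add: aw_def abs_mult)
    also have "\<dots> \<le> 1 * 3" using elim by (intro mult_mono) auto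
    finally show ?case by simp
  qed
qed

lemma aw_int2: "v \<in> Vset \<Longrightarrow> w \<in> Vset \<Longrightarrow> w' \<in> Vset \<Longrightarrow> integrable M (\<lambda>\<omega>. aw v w \<omega> * aw v w' \<omega>)"
proof (rule integrable_const_bound[where B=9])
  assume v: "v \<in> Vset" and w: "w \<in> Vset" and w': "w' \<in> Vset"
  show "AE \<omega> in M. norm (aw v w \<omega> * aw v w' \<omega>) \<le> 9"
    using aw_bound[OF v w] aw_bound[OF v w']
  proof eventually_elim
    case (elim \<omega>)
    have "\<bar>aw v w \<omega> * aw v w' \<omega>\<bar> \<le> 3 * 3" unfolding abs_mult using elim by (intro mult_mono) auto
    then show ?case by simp
  qed
  show "(\<lambda>\<omega>. aw v w \<omega> * aw v w' \<omega>) \<in> borel_measurable M" using v w w' by measurable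
qed

lemma cross:
  assumes v: "v \<in> Vset" and w: "w \<in> Vset" and w': "w' \<in> Vset" and ne: "w \<noteq> w'" and len: "length w' \<le> length w"
  shows "(\<integral>\<omega>. aw v w \<omega> * aw v w' \<omega> \<partial>M) = 0"
proof -
  define A where "A = {v @ w}"
  define B where "B = pref v w \<union> pref v w' \<union> {v @ w'}"
  have disj: "A \<inter> B = {}"
  proof -
    have "v @ w \<notin> pref v w'"
    proof
      assume "v @ w \<in> pref v w'"
      then obtain k where k: "k < length w'" and eq: "v @ w = v @ take k w'" unfolding pref_def by blast
      have "length (v @ w) = length (v @ take k w')" using eq by (rule arg_cong)
      then show False using k len by simp
    qed
    then show ?thesis using pref_notin[of v w] ne by (auto simp: A_def B_def)
  qed
  have AB: "A \<subseteq> Vset" "B \<subseteq> Vset"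
    using v w w' pref_Vset[OF v w] pref_Vset[OF v w'] by (auto simp: A_def B_def)
  have f: "(\<lambda>r. costC (r (v @ w))) \<in> borel_measurable (PiM A (\<lambda>_. borel))"
    unfolding A_def by measurable
  have e1[measurable]: "(\<lambda>r. ell r v w) \<in> borel_measurable (PiM B (\<lambda>_. borel))"
    by (rule ell_pref_meas) (use v w in \<open>auto simp: B_def\<close>)
  have e2[measurable]: "(\<lambda>r. ell r v w') \<in> borel_measurable (PiM B (\<lambda>_. borel))"
    by (rule ell_pref_meas) (use v w' in \<open>auto simp: B_def\<close>)
  have e3[measurable]: "(\<lambda>r. r (v @ w')) \<in> borel_measurable (PiM B (\<lambda>_. borel))"
    by (rule measurable_component_singleton) (auto simp: B_def)
  have g: "(\<lambda>r. ell r v w * ell r v w' * costC (r (v @ w'))) \<in> borel_measurable (PiM B (\<lambda>_. borel))"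
    by measurable
  have rA: "restrict (\<lambda>j. U j \<omega>) A (v @ w) = U (v @ w) \<omega>" for \<omega> by (simp add: A_def)
  have rB1: "ell (restrict (\<lambda>j. U j \<omega>) B) v w = ell (\<lambda>z. U z \<omega>) v w" for \<omega>
    by (rule ell_pref_restrict) (auto simp: B_def)
  have rB2: "ell (restrict (\<lambda>j. U j \<omega>) B) v w' = ell (\<lambda>z. U z \<omega>) v w'" for \<omega>
    by (rule ell_pref_restrict) (auto simp: B_def)
  have rB3: "restrict (\<lambda>j. U j \<omega>) B (v @ w') = U (v @ w') \<omega>" for \<omega> by (simp add: B_def)
  have vw: "v @ w \<in> Vset" using v w by simp
  have Uvw[measurable]: "U (v @ w) \<in> borel_measurable M" using vw by (rule Umeas)
  have fint: "integrable M (\<lambda>\<omega>. costC (restrict (\<lambda>j. U j \<omega>) A (v @ w)))"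
    unfolding rA by (rule integrable_const_bound[where B=3]) (use AE_costC[OF vw] in auto)
  have gint: "integrable M (\<lambda>\<omega>. ell (restrict (\<lambda>j. U j \<omega>) B) v w * ell (restrict (\<lambda>j. U j \<omega>) B) v w'
       * costC (restrict (\<lambda>j. U j \<omega>) B (v @ w')))"
  proof (rule integrable_const_bound[where B=3])
    have vw': "v @ w' \<in> Vset" using v w' by simp
    show "AE \<omega> in M. norm (ell (restrict (\<lambda>j. U j \<omega>) B) v w * ell (restrict (\<lambda>j. U j \<omega>) B) v w'
       * costC (restrict (\<lambda>j. U j \<omega>) B (v @ w'))) \<le> 3"
      using AE_ell[OF v w] AE_ell[OF v w'] AE_costC[OF vw']
    proof eventually_elim
      case (elim \<omega>)
      have "\<bar>ell (\<lambda>z. U z \<omega>) v w * ell (\<lambda>z. U z \<omega>) v w' * costC (U (v @ w') \<omega>)\<bar> \<le> (1 * 1) * 3"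
        unfolding abs_mult using elim by (intro mult_mono) auto
      then show ?case unfolding rB1 rB2 rB3 real_norm_def by simp
    qed
    have [measurable]: "U (v @ w') \<in> borel_measurable M" using v w' by (intro Umeas) simp
    have [measurable]: "(\<lambda>\<omega>. ell (\<lambda>z. U z \<omega>) v w) \<in> borel_measurable M" by (rule mU.ell_meas[OF v w])
    have [measurable]: "(\<lambda>\<omega>. ell (\<lambda>z. U z \<omega>) v w') \<in> borel_measurable M" by (rule mU.ell_meas[OF v w'])
    show "(\<lambda>\<omega>. ell (restrict (\<lambda>j. U j \<omega>) B) v w * ell (restrict (\<lambda>j. U j \<omega>) B) v w'
       * costC (restrict (\<lambda>j. U j \<omega>) B (v @ w'))) \<in> borel_measurable M"
      unfolding rB1 rB2 rB3 by measurable
  qed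
  have "(\<integral>\<omega>. aw v w \<omega> * aw v w' \<omega> \<partial>M) = (\<integral>\<omega>. costC (restrict (\<lambda>j. U j \<omega>) A (v @ w)) *
       (ell (restrict (\<lambda>j. U j \<omega>) B) v w * ell (restrict (\<lambda>j. U j \<omega>) B) v w'
       * costC (restrict (\<lambda>j. U j \<omega>) B (v @ w'))) \<partial>M)"
    unfolding rA rB1 rB2 rB3 aw_def by (simp add: ac_simps)
  also have "\<dots> = (\<integral>\<omega>. costC (restrict (\<lambda>j. U j \<omega>) A (v @ w)) \<partial>M) * (\<integral>\<omega>. ell (restrict (\<lambda>j. U j \<omega>) B) v w * ell (restrict (\<lambda>j. U j \<omega>) B) v w'
       * costC (restrict (\<lambda>j. U j \<omega>) B (v @ w')) \<partial>M)"
    by (rule blocks_int[OF disj AB f g fint gint])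
  also have "(\<integral>\<omega>. costC (restrict (\<lambda>j. U j \<omega>) A (v @ w)) \<partial>M) = 0"
    unfolding rA using exp[OF vw costC_meas] costC_uni by simp
  finally show ?thesis by simp
qed

lemma diag: assumes v: "v \<in> Vset" and w: "w \<in> Vset"
  shows "(\<integral>\<omega>. aw v w \<omega> * aw v w \<omega> \<partial>M) \<le> 9 * (1/3) ^ length w"
proof -
  have vw: "v @ w \<in> Vset" using v w by simp
  have [measurable]: "(\<lambda>\<omega>. ell (\<lambda>z. U z \<omega>) v w) \<in> borel_measurable M" by (rule mU.ell_meas[OF v w])
  have int2: "integrable M (\<lambda>\<omega>. 9 * (ell (\<lambda>z. U z \<omega>) v w)\<^sup>2)"
  proof (rule integrable_const_bound[where B=9])
    show "AE \<omega> in M. norm (9 * (ell (\<lambda>z. U z \<omega>) v w)\<^sup>2) \<le> 9"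
      using AE_ell[OF v w]
    proof eventually_elim
      case (elim \<omega>)
      then have "(ell (\<lambda>z. U z \<omega>) v w)\<^sup>2 \<le> 1" by (simp add: power_le_one)
      then show ?case by simp
    qed
  qed measurable
  have "(\<integral>\<omega>. aw v w \<omega> * aw v w \<omega> \<partial>M) \<le> (\<integral>\<omega>. 9 * (ell (\<lambda>z. U z \<omega>) v w)\<^sup>2 \<partial>M)"
  proof (rule integral_mono_AE[OF aw_int2[OF v w w] int2])
    show "AE \<omega> in M. aw v w \<omega> * aw v w \<omega> \<le> 9 * (ell (\<lambda>z. U z \<omega>) v w)\<^sup>2"
      using AE_costC[OF vw]
    proof eventually_elim
      case (elim \<omega>)
      have "\<bar>costC (U (v @ w) \<omega>)\<bar> \<le> \<bar>3\<bar>" using elim by simp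
      then have "(costC (U (v @ w) \<omega>))\<^sup>2 \<le> 3\<^sup>2" by (simp only: abs_le_square_iff)
      then have "(ell (\<lambda>z. U z \<omega>) v w)\<^sup>2 * (costC (U (v @ w) \<omega>))\<^sup>2 \<le> (ell (\<lambda>z. U z \<omega>) v w)\<^sup>2 * 9"
        by (intro mult_left_mono) auto
      then show ?case by (simp add: aw_def power2_eq_square ac_simps)
    qed
  qed
  also have "\<dots> = 9 * (1/3) ^ length w"
    using ell_sq_exp[OF v w] by simp
  finally show ?thesis .
qed

lemma L2:
  assumes v: "v \<in> Vset" and W: "finite W" "W \<subseteq> Vset"
  shows "(\<integral>\<omega>. (\<Sum>w\<in>W. aw v w \<omega>)\<^sup>2 \<partial>M) \<le> 9 * (\<Sum>w\<in>W. (1/3) ^ length w)"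
proof -
  have "(\<integral>\<omega>. (\<Sum>w\<in>W. aw v w \<omega>)\<^sup>2 \<partial>M) = (\<integral>\<omega>. (\<Sum>w\<in>W. \<Sum>w'\<in>W. aw v w \<omega> * aw v w' \<omega>) \<partial>M)"
    by (simp add: power2_eq_square sum_product)
  also have "\<dots> = (\<Sum>w\<in>W. \<Sum>w'\<in>W. (\<integral>\<omega>. aw v w \<omega> * aw v w' \<omega> \<partial>M))"
    using W v by (simp add: integrable_sum aw_int2 subsetD)
  also have "\<dots> = (\<Sum>w\<in>W. (\<integral>\<omega>. aw v w \<omega> * aw v w \<omega> \<partial>M))"
  proof (rule sum.cong[OF refl])
    fix w assume wW: "w \<in> W"
    have "(\<Sum>w'\<in>W. (\<integral>\<omega>. aw v w \<omega> * aw v w' \<omega> \<partial>M)) = (\<Sum>w'\<in>W. if w' = w then (\<integral>\<omega>. aw v w \<omega> * aw v w \<omega> \<partial>M) else 0)"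
    proof (rule sum.cong[OF refl])
      fix w' assume w'W: "w' \<in> W"
      have w: "w \<in> Vset" and w': "w' \<in> Vset" using wW w'W W by auto
      show "(\<integral>\<omega>. aw v w \<omega> * aw v w' \<omega> \<partial>M) = (if w' = w then (\<integral>\<omega>. aw v w \<omega> * aw v w \<omega> \<partial>M) else 0)"
      proof (cases "w' = w")
        case False
        show ?thesis
        proof (cases "length w' \<le> length w")
          case True then show ?thesis using cross[OF v w w'] False by auto
        next
          case F2: False
          then have "(\<integral>\<omega>. aw v w' \<omega> * aw v w \<omega> \<partial>M) = 0" using cross[OF v w' w] False by auto
          then show ?thesis using False by (simp add: mult.commute)
        qed
      qed simp
    qed
    also have "\<dots> = (\<integral>\<omega>. aw v w \<omega> * aw v w \<omega> \<partial>M)" using W wW by simp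
    finally show "(\<Sum>w'\<in>W. (\<integral>\<omega>. aw v w \<omega> * aw v w' \<omega> \<partial>M)) = (\<integral>\<omega>. aw v w \<omega> * aw v w \<omega> \<partial>M)" .
  qed
  also have "\<dots> \<le> (\<Sum>w\<in>W. 9 * (1/3) ^ length w)"
    by (rule sum_mono) (use W v in \<open>auto intro!: diag\<close>)
  finally show ?thesis by (simp add: sum_distrib_left)
qed

end



lemma sum_Vlen_pow: "(\<Sum>w\<in>Vlen k. (1/3::real) ^ length w) = (2/3) ^ k"
proof -
  have "(\<Sum>w\<in>Vlen k. (1/3::real) ^ length w) = (\<Sum>w\<in>Vlen k. (1/3::real) ^ k)"
    by (rule sum.cong) (auto simp: Vlen_def)
  also have "\<dots> = 2 ^ k * (1/3) ^ k" by (simp add: card_Vlen)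
  also have "\<dots> = (2/3) ^ k" by (simp add: power_mult_distrib[symmetric])
  finally show ?thesis .
qed

lemma sum_Vlt_pow: "(\<Sum>w\<in>Vlt m. (1/3::real) ^ length w) \<le> 3"
proof -
  have "(\<Sum>w\<in>Vlt m. (1/3::real) ^ length w) = (\<Sum>k<m. (2/3) ^ k)"
    by (simp add: sum_Vlt sum_Vlen_pow)
  also have "\<dots> \<le> (\<Sum>k. (2/3::real) ^ k)"
    by (rule sum_le_suminf) auto
  also have "\<dots> = 3" by (simp add: suminf_geometric)
  finally show ?thesis .
qed

lemma jensen_sq:
  assumes "prob_space M" "integrable M (\<lambda>x. (X x)\<^sup>2)" "integrable M (X :: 'a \<Rightarrow> real)"
  shows "(\<integral>x. \<bar>X x\<bar> \<partial>M) \<le> sqrt (\<integral>x. (X x)\<^sup>2 \<partial>M)"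
proof -
  interpret prob_space M by fact
  define c where "c = (\<integral>x. \<bar>X x\<bar> \<partial>M)"
  have ia: "integrable M (\<lambda>x. \<bar>X x\<bar>)" using assms(3) by (rule integrable_abs)
  have "0 \<le> (\<integral>x. (\<bar>X x\<bar> - c)\<^sup>2 \<partial>M)" by simp
  also have "(\<lambda>x. (\<bar>X x\<bar> - c)\<^sup>2) = (\<lambda>x. ((X x)\<^sup>2 - 2 * c * \<bar>X x\<bar>) + c\<^sup>2)"
    by (auto simp: fun_eq_iff power2_eq_square algebra_simps)
  also have "(\<integral>x. ((X x)\<^sup>2 - 2 * c * \<bar>X x\<bar>) + c\<^sup>2 \<partial>M) = (\<integral>x. (X x)\<^sup>2 \<partial>M) - 2 * c * c + c\<^sup>2"
    using assms(2) ia by (simp add: c_def prob_space)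
  finally have "c\<^sup>2 \<le> (\<integral>x. (X x)\<^sup>2 \<partial>M)" by (simp add: power2_eq_square)
  then show ?thesis unfolding c_def by (rule real_le_rsqrt)
qed

context qs
begin

lemma aw_int: "v \<in> Vset \<Longrightarrow> w \<in> Vset \<Longrightarrow> integrable M (aw v w)"
  by (rule integrable_const_bound[where B=3]) (auto simp: aw_bound)

lemma sq_int: "v \<in> Vset \<Longrightarrow> finite W \<Longrightarrow> W \<subseteq> Vset \<Longrightarrow> integrable M (\<lambda>\<omega>. (\<Sum>w\<in>W. aw v w \<omega>)\<^sup>2)"
  by (simp add: power2_eq_square sum_product integrable_sum aw_int2 subsetD)

lemma sum_int: "v \<in> Vset \<Longrightarrow> finite W \<Longrightarrow> W \<subseteq> Vset \<Longrightarrow> integrable M (\<lambda>\<omega>. (\<Sum>w\<in>W. aw v w \<omega>))"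
  by (simp add: integrable_sum aw_int subsetD)

lemma Qlim_aw: "Qlim (\<lambda>z. U z \<omega>) v = lim (\<lambda>m. \<Sum>k<m. \<Sum>w\<in>Vlen k. aw v w \<omega>)"
  unfolding Qlim_def aw_def by (simp add: sum_Vlt)

lemma Qmoment:
  assumes v: "v \<in> Vset"
  shows "(\<integral>\<^sup>+\<omega>. ennreal ((Qlim (\<lambda>z. U z \<omega>) v)\<^sup>2) \<partial>M) \<le> 27"
proof -
  define D where "D k \<omega> = (\<Sum>w\<in>Vlen k. aw v w \<omega>)" for k \<omega>
  define Q where "Q m \<omega> = (\<Sum>w\<in>Vlt m. aw v w \<omega>)" for m \<omega>
  have Vlen: "finite (Vlen k)" "Vlen k \<subseteq> Vset" for k by (auto simp: finite_Vlen Vlen_Vset)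
  have Vlt: "finite (Vlt k)" "Vlt k \<subseteq> Vset" for k by (auto simp: finite_Vlt Vlt_Vset)
  have Dm[measurable]: "D k \<in> borel_measurable M" for k
    unfolding D_def[abs_def] using v Vlen_Vset by (intro borel_measurable_sum) auto
  have Qm[measurable]: "Q k \<in> borel_measurable M" for k
    unfolding Q_def[abs_def] using v Vlt_Vset by (intro borel_measurable_sum) auto
  have QD: "Q m \<omega> = (\<Sum>k<m. D k \<omega>)" for m \<omega> by (simp add: Q_def D_def sum_Vlt)
  have ED: "(\<integral>\<omega>. \<bar>D k \<omega>\<bar> \<partial>M) \<le> 3 * sqrt (2/3) ^ k" for k
  proof -
    have "(\<integral>\<omega>. \<bar>D k \<omega>\<bar> \<partial>M) \<le> sqrt (\<integral>\<omega>. (D k \<omega>)\<^sup>2 \<partial>M)"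
      unfolding D_def using v Vlen by (intro jensen_sq prob_space_axioms sq_int sum_int) auto
    also have "\<dots> \<le> sqrt (9 * (2/3) ^ k)"
      using L2[OF v Vlen(1,2), of k] by (simp add: D_def sum_Vlen_pow)
    also have "\<dots> = 3 * sqrt (2/3) ^ k" by (simp add: real_sqrt_mult real_sqrt_power)
    finally show ?thesis .
  qed
  have sumg: "summable (\<lambda>k. 3 * sqrt (2/3::real) ^ k)"
    by (intro summable_mult summable_geometric) auto
  have "(\<integral>\<^sup>+\<omega>. (\<Sum>k. ennreal \<bar>D k \<omega>\<bar>) \<partial>M) = (\<Sum>k. \<integral>\<^sup>+\<omega>. ennreal \<bar>D k \<omega>\<bar> \<partial>M)"
    by (rule nn_integral_suminf) measurable
  also have "\<dots> = (\<Sum>k. ennreal (\<integral>\<omega>. \<bar>D k \<omega>\<bar> \<partial>M))"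
    using v Vlen by (intro suminf_cong nn_integral_eq_integral integrable_abs) (auto simp: D_def sum_int)
  also have "\<dots> \<le> (\<Sum>k. ennreal (3 * sqrt (2/3) ^ k))"
    by (intro suminf_le ennreal_leI ED) auto
  also have "\<dots> = ennreal (\<Sum>k. 3 * sqrt (2/3) ^ k)"
    by (rule suminf_ennreal2[OF _ sumg]) simp
  finally have fin: "(\<integral>\<^sup>+\<omega>. (\<Sum>k. ennreal \<bar>D k \<omega>\<bar>) \<partial>M) \<noteq> \<infinity>"
    by (auto simp: top_unique)
  have AEfin: "AE \<omega> in M. (\<Sum>k. ennreal \<bar>D k \<omega>\<bar>) \<noteq> \<infinity>"
    by (rule nn_integral_noteq_infinite[OF _ fin]) measurable
  have AEconv: "AE \<omega> in M. (\<lambda>m. Q m \<omega>) \<longlonglongrightarrow> Qlim (\<lambda>z. U z \<omega>) v"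
    using AEfin
  proof eventually_elim
    case (elim \<omega>)
    then have "summable (\<lambda>k. \<bar>D k \<omega>\<bar>)" by (intro summable_suminf_not_top) auto
    then have "summable (\<lambda>k. D k \<omega>)" by (rule summable_rabs_cancel)
    then have lim: "(\<lambda>m. Q m \<omega>) \<longlonglongrightarrow> (\<Sum>k. D k \<omega>)" unfolding QD by (rule summable_LIMSEQ)
    moreover have "Qlim (\<lambda>z. U z \<omega>) v = (\<Sum>k. D k \<omega>)"
      using lim unfolding Qlim_aw by (simp add: QD D_def limI)
    ultimately show ?case by simp
  qed
  have "(\<integral>\<^sup>+\<omega>. ennreal ((Qlim (\<lambda>z. U z \<omega>) v)\<^sup>2) \<partial>M) = (\<integral>\<^sup>+\<omega>. liminf (\<lambda>m. ennreal ((Q m \<omega>)\<^sup>2)) \<partial>M)"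
  proof (rule nn_integral_cong_AE)
    show "AE \<omega> in M. ennreal ((Qlim (\<lambda>z. U z \<omega>) v)\<^sup>2) = liminf (\<lambda>m. ennreal ((Q m \<omega>)\<^sup>2))"
      using AEconv
    proof eventually_elim
      case (elim \<omega>)
      then have "(\<lambda>m. ennreal ((Q m \<omega>)\<^sup>2)) \<longlonglongrightarrow> ennreal ((Qlim (\<lambda>z. U z \<omega>) v)\<^sup>2)"
        by (intro tendsto_ennrealI tendsto_power)
      then show ?case by (subst lim_imp_Liminf) auto
    qed
  qed
  also have "\<dots> \<le> liminf (\<lambda>m. \<integral>\<^sup>+\<omega>. ennreal ((Q m \<omega>)\<^sup>2) \<partial>M)"
    by (rule nn_integral_liminf) measurable
  also have "\<dots> \<le> limsup (\<lambda>m. \<integral>\<^sup>+\<omega>. ennreal ((Q m \<omega>)\<^sup>2) \<partial>M)"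
    by (rule Liminf_le_Limsup) simp
  also have "\<dots> \<le> 27"
  proof (rule Limsup_bounded, rule always_eventually, rule allI)
    fix m
    have "(\<integral>\<^sup>+\<omega>. ennreal ((Q m \<omega>)\<^sup>2) \<partial>M) = ennreal (\<integral>\<omega>. (Q m \<omega>)\<^sup>2 \<partial>M)"
      using v Vlt by (intro nn_integral_eq_integral) (auto simp: Q_def sq_int)
    also have "\<dots> \<le> ennreal 27"
    proof (rule ennreal_leI)
      have "(\<integral>\<omega>. (Q m \<omega>)\<^sup>2 \<partial>M) \<le> 9 * (\<Sum>w\<in>Vlt m. (1/3) ^ length w)"
        unfolding Q_def by (rule L2[OF v Vlt(1,2)])
      also have "\<dots> \<le> 9 * 3" using sum_Vlt_pow[of m] by simp
      finally show "(\<integral>\<omega>. (Q m \<omega>)\<^sup>2 \<partial>M) \<le> 27" by simp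
    qed
    finally show "(\<integral>\<^sup>+\<omega>. ennreal ((Q m \<omega>)\<^sup>2) \<partial>M) \<le> 27" by simp
  qed
  finally show ?thesis .
qed

end



lemma amgm_ennreal:
  assumes "c > 0"
  shows "ennreal (2 * c) * f \<le> f ^ 2 + ennreal (c ^ 2)"
proof (cases f)
  case (real y)
  have "2 * c * y \<le> y ^ 2 + c ^ 2"
    using sum_squares_ge_zero[of "y - c" 0] by (simp add: power2_eq_square algebra_simps)
  then show ?thesis using real assms
    by (simp add: ennreal_mult[symmetric] ennreal_power ennreal_plus[symmetric] del: ennreal_plus)
next
  case top
  then show ?thesis using assms by (simp add: ennreal_mult_top)
qed

lemma nn_le_sqrt:
  assumes M: "prob_space M" and f[measurable]: "f \<in> borel_measurable M" and c: "c > 0"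
    and sq: "(\<integral>\<^sup>+x. f x ^ 2 \<partial>M) \<le> ennreal (c ^ 2)"
  shows "(\<integral>\<^sup>+x. f x \<partial>M) \<le> ennreal c"
proof -
  interpret prob_space M by fact
  have "ennreal (2 * c) * (\<integral>\<^sup>+x. f x \<partial>M) = (\<integral>\<^sup>+x. ennreal (2 * c) * f x \<partial>M)"
    by (rule nn_integral_cmult[symmetric]) simp
  also have "\<dots> \<le> (\<integral>\<^sup>+x. f x ^ 2 + ennreal (c ^ 2) \<partial>M)"
    by (intro nn_integral_mono amgm_ennreal c)
  also have "\<dots> = (\<integral>\<^sup>+x. f x ^ 2 \<partial>M) + ennreal (c ^ 2)"
    by (subst nn_integral_add) (auto simp: emeasure_space_1)
  also have "\<dots> \<le> ennreal (c ^ 2) + ennreal (c ^ 2)" using sq by (intro add_mono) auto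
  also have "\<dots> = ennreal (2 * c) * ennreal c"
    using c by (simp add: ennreal_mult[symmetric] ennreal_plus[symmetric] power2_eq_square del: ennreal_plus)
  finally show ?thesis
    using c by (subst (asm) ennreal_mult_le_mult_iff) auto
qed

context qs
begin

lemma Cfun_bound:
  assumes u: "0 \<le> u []" "u [] \<le> 1"
  shows "supnorm (Cfun u []) \<le> ennreal (7 + \<bar>Qlim u [1]\<bar>)"
  unfolding supnorm_def
proof (rule SUP_least)
  fix t :: real assume t: "t \<in> {0..1}"
  have "\<bar>Cfun u [] t\<bar> \<le> \<bar>costC2 t (u [])\<bar> + \<bar>u []\<bar> * \<bar>Qlim u [1]\<bar>"
  proof (cases "u [] \<le> t")
    case True
    then have "Cfun u [] t = costC2 t (u []) + u [] * Qlim u [1]" by (simp add: Cfun_def)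
    then show ?thesis using abs_triangle_ineq[of "costC2 t (u [])" "u [] * Qlim u [1]"] by (simp add: abs_mult)
  next
    case False
    then show ?thesis by (simp add: Cfun_def)
  qed
  also have "\<dots> \<le> 7 + 1 * \<bar>Qlim u [1]\<bar>"
    using u t by (intro add_mono mult_right_mono costC2_bound) auto
  finally show "ennreal \<bar>Cfun u [] t\<bar> \<le> ennreal (7 + \<bar>Qlim u [1]\<bar>)" by (intro ennreal_leI) simp
qed

lemma bsq0_finite: "(\<integral>\<^sup>+\<omega>. Fsq 0 (\<lambda>v. U v \<omega>) \<partial>M) < \<infinity>"
proof -
  have Qm[measurable]: "(\<lambda>\<omega>. Qlim (\<lambda>v. U v \<omega>) [1]) \<in> borel_measurable M"
    by (rule mU.Qlim_meas) simp
  have Qm'[measurable]: "(\<lambda>\<omega>. Qlim (\<lambda>v. U v \<omega>) [Suc 0]) \<in> borel_measurable M"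
    using Qm by simp
  have "(\<integral>\<^sup>+\<omega>. Fsq 0 (\<lambda>v. U v \<omega>) \<partial>M) \<le> (\<integral>\<^sup>+\<omega>. ennreal 98 + 2 * ennreal ((Qlim (\<lambda>v. U v \<omega>) [1])\<^sup>2) \<partial>M)"
  proof (rule nn_integral_mono_AE)
    show "AE \<omega> in M. Fsq 0 (\<lambda>v. U v \<omega>) \<le> ennreal 98 + 2 * ennreal ((Qlim (\<lambda>v. U v \<omega>) [1])\<^sup>2)"
      using AE_range
    proof eventually_elim
      case (elim \<omega>)
      define q where "q = Qlim (\<lambda>v. U v \<omega>) [1]"
      have "U [] \<omega> \<in> {0..1}" using elim by simp
      then have "supnorm (Cfun (\<lambda>v. U v \<omega>) []) \<le> ennreal (7 + \<bar>q\<bar>)"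
        unfolding q_def by (intro Cfun_bound) auto
      then have "Fsq 0 (\<lambda>v. U v \<omega>) \<le> ennreal (7 + \<bar>q\<bar>) ^ 2"
        by (simp add: Fsq_def Ssum_0 power_mono)
      also have "\<dots> = ennreal ((7 + \<bar>q\<bar>)\<^sup>2)" by (rule ennreal_power) simp
      also have "\<dots> \<le> ennreal (98 + 2 * q\<^sup>2)"
      proof (rule ennreal_leI)
        show "(7 + \<bar>q\<bar>)\<^sup>2 \<le> 98 + 2 * q\<^sup>2"
          using sum_squares_ge_zero[of "\<bar>q\<bar> - 7" 0] by (simp add: power2_eq_square algebra_simps)
      qed
      also have "\<dots> = ennreal 98 + ennreal (2 * q\<^sup>2)" by (rule ennreal_plus) auto
      also have "ennreal (2 * q\<^sup>2) = ennreal 2 * ennreal (q\<^sup>2)" by (rule ennreal_mult) auto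
      also have "ennreal 2 = 2" by simp
      finally show ?case by (simp add: q_def)
    qed
  qed
  also have "\<dots> = ennreal 98 + 2 * (\<integral>\<^sup>+\<omega>. ennreal ((Qlim (\<lambda>v. U v \<omega>) [1])\<^sup>2) \<partial>M)"
    by (subst nn_integral_add) (auto simp: nn_integral_cmult emeasure_space_1)
  also have "\<dots> \<le> ennreal 98 + 2 * 27"
    using Qmoment[of "[1]"] by (intro add_mono mult_left_mono) auto
  also have "\<dots> < \<infinity>" by (simp del: ennreal_numeral add: ennreal_numeral[symmetric] ennreal_mult[symmetric])
  finally show ?thesis .
qed

lemma bsq_geom: "(\<integral>\<^sup>+\<omega>. Fsq m (\<lambda>v. U v \<omega>) \<partial>M) \<le> ennreal ((2/3) ^ m) * (\<integral>\<^sup>+\<omega>. Fsq 0 (\<lambda>v. U v \<omega>) \<partial>M)"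
proof (induction m)
  case 0 then show ?case by simp
next
  case (Suc m)
  have "(\<integral>\<^sup>+\<omega>. Fsq (Suc m) (\<lambda>v. U v \<omega>) \<partial>M) \<le> ennreal (2/3) * (\<integral>\<^sup>+\<omega>. Fsq m (\<lambda>v. U v \<omega>) \<partial>M)"
    by (rule rec_step)
  also have "\<dots> \<le> ennreal (2/3) * (ennreal ((2/3) ^ m) * (\<integral>\<^sup>+\<omega>. Fsq 0 (\<lambda>v. U v \<omega>) \<partial>M))"
    by (intro mult_left_mono Suc) auto
  also have "\<dots> = ennreal ((2/3) ^ Suc m) * (\<integral>\<^sup>+\<omega>. Fsq 0 (\<lambda>v. U v \<omega>) \<partial>M)"
  proof -
    have e: "ennreal (2/3) * ennreal ((2/3)^m) = ennreal ((2/3)^Suc m)"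
      by (subst ennreal_mult[symmetric]) auto
    show ?thesis by (simp only: mult.assoc[symmetric] e)
  qed
  finally show ?case .
qed

lemma AE_summable: "AE \<omega> in M. (\<Sum>m. supnorm (Ssum (\<lambda>v. U v \<omega>) [] m)) < \<infinity>"
proof -
  define B0 where "B0 = enn2real (\<integral>\<^sup>+\<omega>. Fsq 0 (\<lambda>v. U v \<omega>) \<partial>M)"
  have B0: "(\<integral>\<^sup>+\<omega>. Fsq 0 (\<lambda>v. U v \<omega>) \<partial>M) = ennreal B0" "0 \<le> B0"
    using bsq0_finite by (auto simp: B0_def less_top ennreal_enn2real)
  define c where "c m = sqrt (2/3) ^ m * (sqrt B0 + 1)" for m :: nat
  have "0 \<le> sqrt B0" using B0(2) by simp
  then have "0 < sqrt B0 + 1" by linarith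
  then have cpos: "c m > 0" for m by (simp add: c_def)
  have sm[measurable]: "(\<lambda>\<omega>. supnorm (Ssum (\<lambda>v. U v \<omega>) [] m)) \<in> borel_measurable M" for m
    by (rule mU.supnorm_meas)
  have Em: "(\<integral>\<^sup>+\<omega>. supnorm (Ssum (\<lambda>v. U v \<omega>) [] m) \<partial>M) \<le> ennreal (c m)" for m
  proof (rule nn_le_sqrt[OF prob_space_axioms sm cpos])
    have "(\<integral>\<^sup>+\<omega>. supnorm (Ssum (\<lambda>v. U v \<omega>) [] m) ^ 2 \<partial>M) \<le> ennreal ((2/3) ^ m) * ennreal B0"
      using bsq_geom[of m] B0 by (simp add: Fsq_def)
    also have "\<dots> = ennreal ((2/3) ^ m * B0)" by (rule ennreal_mult[symmetric]) (auto simp: B0(2))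
    also have "\<dots> \<le> ennreal ((c m)\<^sup>2)"
    proof (rule ennreal_leI)
      have "B0 \<le> (sqrt B0 + 1)\<^sup>2" using B0(2)
        by (simp add: power2_eq_square algebra_simps)
      then have "(2/3) ^ m * B0 \<le> (2/3) ^ m * (sqrt B0 + 1)\<^sup>2" by (intro mult_left_mono) auto
      also have "\<dots> = (c m)\<^sup>2"
      proof -
        have "(sqrt (2/3::real) ^ m)\<^sup>2 = (sqrt (2/3) ^ 2) ^ m"
          by (simp only: power_mult[symmetric] mult.commute)
        then have s: "(sqrt (2/3::real) ^ m)\<^sup>2 = (2/3) ^ m" by simp
        show ?thesis unfolding c_def power_mult_distrib s ..
      qed
      finally show "(2/3) ^ m * B0 \<le> (c m)\<^sup>2" .
    qed
    finally show "(\<integral>\<^sup>+\<omega>. supnorm (Ssum (\<lambda>v. U v \<omega>) [] m) ^ 2 \<partial>M) \<le> ennreal ((c m)\<^sup>2)" .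
  qed
  have sumc: "summable c" unfolding c_def by (intro summable_mult2 summable_geometric) auto
  have "(\<integral>\<^sup>+\<omega>. (\<Sum>m. supnorm (Ssum (\<lambda>v. U v \<omega>) [] m)) \<partial>M) = (\<Sum>m. \<integral>\<^sup>+\<omega>. supnorm (Ssum (\<lambda>v. U v \<omega>) [] m) \<partial>M)"
    by (rule nn_integral_suminf) measurable
  also have "\<dots> \<le> (\<Sum>m. ennreal (c m))" by (intro suminf_le Em) auto
  also have "\<dots> = ennreal (\<Sum>m. c m)" by (rule suminf_ennreal2[OF _ sumc]) (simp add: less_imp_le cpos)
  finally have "(\<integral>\<^sup>+\<omega>. (\<Sum>m. supnorm (Ssum (\<lambda>v. U v \<omega>) [] m)) \<partial>M) \<noteq> \<infinity>"
    by (auto simp: top_unique)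
  then have "AE \<omega> in M. (\<Sum>m. supnorm (Ssum (\<lambda>v. U v \<omega>) [] m)) \<noteq> \<infinity>"
    by (intro nn_integral_noteq_infinite) measurable
  then show ?thesis by (simp add: less_top)
qed

end

theorem mainTheorem4:
  fixes M :: "'a measure" and U :: "nat list \<Rightarrow> 'a \<Rightarrow> real"
  assumes "prob_space M"
    and "\<And>v. v \<in> Vset \<Longrightarrow> U v \<in> borel_measurable M"
    and "prob_space.indep_vars M (\<lambda>_. borel) U Vset"
    and "\<And>v. v \<in> Vset \<Longrightarrow> distr M borel (U v) = uniform_measure lborel {0..1}"
    and bsq_def: "\<And>m. bsq m = \<integral>\<^sup>+ \<omega>. (supnorm (Ssum (\<lambda>v. U v \<omega>) [] m)) ^ 2 \<partial>M"
    and b_def: "\<And>m. b m = sqrt (enn2real (bsq m))"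
  shows "(\<forall>m\<ge>1. bsq m \<le> ennreal (2/3) * bsq (m - 1))
    \<and> (\<forall>m. b m \<le> (2/3) powr (real m / 2) * b 0)
    \<and> b 0 = sqrt (enn2real (\<integral>\<^sup>+ \<omega>. (supnorm (Cfun (\<lambda>v. U v \<omega>) [])) ^ 2 \<partial>M))
    \<and> bsq 0 < \<infinity>
    \<and> (AE \<omega> in M. (\<Sum>m. supnorm (Ssum (\<lambda>v. U v \<omega>) [] m)) < \<infinity>)"
proof -
  interpret qs M U
    using assms(1-4) by (simp add: qs_def qs_axioms_def)
  have bsq: "bsq m = (\<integral>\<^sup>+\<omega>. Fsq m (\<lambda>v. U v \<omega>) \<partial>M)" for m
    by (simp add: bsq_def Fsq_def)
  have P1: "\<forall>m\<ge>1. bsq m \<le> ennreal (2/3) * bsq (m - 1)"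
  proof (intro allI impI)
    fix m :: nat assume "1 \<le> m"
    then obtain k where m: "m = Suc k" by (cases m) auto
    show "bsq m \<le> ennreal (2/3) * bsq (m - 1)" unfolding m bsq using rec_step[of k] by simp
  qed
  have fin: "bsq 0 < \<infinity>" unfolding bsq by (rule bsq0_finite)
  have P2: "\<forall>m. b m \<le> (2/3) powr (real m / 2) * b 0"
  proof
    fix m
    have "enn2real (bsq m) \<le> enn2real (ennreal ((2/3) ^ m) * bsq 0)"
      using bsq_geom[of m] fin unfolding bsq[symmetric]
      by (intro enn2real_mono) (auto simp: ennreal_mult_less_top)
    also have "\<dots> = (2/3) ^ m * enn2real (bsq 0)" by (simp add: enn2real_mult)
    finally have "b m \<le> sqrt ((2/3) ^ m * enn2real (bsq 0))" unfolding b_def by simp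
    also have "\<dots> = sqrt ((2/3) ^ m) * b 0" by (simp add: b_def real_sqrt_mult)
    also have "sqrt ((2/3::real) ^ m) = (2/3) powr (real m / 2)"
      by (simp add: powr_half_sqrt_powr powr_realpow)
    finally show "b m \<le> (2/3) powr (real m / 2) * b 0" .
  qed
  have P3: "b 0 = sqrt (enn2real (\<integral>\<^sup>+ \<omega>. (supnorm (Cfun (\<lambda>v. U v \<omega>) [])) ^ 2 \<partial>M))"
    by (simp add: b_def bsq_def Ssum_0)
  show ?thesis using P1 P2 P3 fin AE_summable by blast
qed


end
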